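(* Let $F$ be a forest each of whose components is rooted or double-rooted. Suppose that $d\ge 0$ of the components of $F$ are double-rooted and that the two roots of each such component are at distance at least $7$. Let $B$ be a complete graph on at least $v(F)+\Delta(F)$ vertices, all edges free. Then for any injective assignment of the roots of $F$ to vertices of $B$ fixed at the beginning, Waiter, playing the Waiter-Client game on $B$, can force a red copy $\bar F$ of $F$ within at most $e(F)+d$ rounds in such a way that (a) every root is mapped to its assigned vertex; (b) every colored edge has an endpoint in a non-leaf of $\bar F$; (c) every non-leaf of $\bar F$ is incident with at most $\Delta(F)$ blue edges whose other endpoint is in $V(B)\setminus V(\bar F)$.
   Context: Waiter-Client game on $B$: in each round Waiter offers two free edges of $B$, Client colors one red and the other becomes blue. A component of a forest with designated roots is rooted if it contains exactly one root and double-rooted if it contains exactly two roots. A leaf is a vertex of degree 1 that is not a root; leaves of $\bar F$ are images of leaves of $F$. *)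

theory Defs
  imports Main
begin

definition graph :: "'a set \<Rightarrow> 'a set set \<Rightarrow> bool" where
  "graph V E \<longleftrightarrow> finite V \<and> (\<forall>e\<in>E. e \<subseteq> V \<and> card e = 2)"

definition deg :: "'a set set \<Rightarrow> 'a \<Rightarrow> nat" where
  "deg E v = card {e\<in>E. v \<in> e}"

definition maxdeg :: "'a set \<Rightarrow> 'a set set \<Rightarrow> nat" where
  "maxdeg V E = Max (insert 0 (deg E ` V))"

text \<open>A walk given as a nonempty list of vertices; consecutive vertices are adjacent.
  Its length (number of edges) is length xs - 1.\<close>

definition walk :: "'a set set \<Rightarrow> 'a list \<Rightarrow> bool" where
  "walk E xs \<longleftrightarrow> xs \<noteq> [] \<and> (\<forall>i. Suc i < length xs \<longrightarrow> {xs ! i, xs ! Suc i} \<in> E)"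

definition connected :: "'a set \<Rightarrow> 'a set set \<Rightarrow> 'a \<Rightarrow> 'a \<Rightarrow> bool" where
  "connected V E u v \<longleftrightarrow> u \<in> V \<and> (\<exists>xs. walk E xs \<and> hd xs = u \<and> last xs = v)"

definition components :: "'a set \<Rightarrow> 'a set set \<Rightarrow> 'a set set" where
  "components V E = (\<lambda>v. {u. connected V E v u}) ` V"

definition dist_ge :: "'a set set \<Rightarrow> 'a \<Rightarrow> 'a \<Rightarrow> nat \<Rightarrow> bool" where
  "dist_ge E u v k \<longleftrightarrow> (\<forall>xs. walk E xs \<and> hd xs = u \<and> last xs = v \<longrightarrow> k \<le> length xs - 1)"

definition forest :: "'a set \<Rightarrow> 'a set set \<Rightarrow> bool" where
  "forest V E \<longleftrightarrow> graph V E \<and>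
     \<not> (\<exists>xs. walk E xs \<and> distinct xs \<and> 3 \<le> length xs \<and> {last xs, hd xs} \<in> E)"

definition leaves :: "'a set \<Rightarrow> 'a set set \<Rightarrow> 'a set \<Rightarrow> 'a set" where
  "leaves V E R = {v\<in>V. deg E v = 1 \<and> v \<notin> R}"

definition double_rooted_comps :: "'a set \<Rightarrow> 'a set set \<Rightarrow> 'a set \<Rightarrow> 'a set set" where
  "double_rooted_comps V E R = {C\<in>components V E. card (C \<inter> R) = 2}"

definition Kedges :: "'b set \<Rightarrow> 'b set set" where
  "Kedges W = {e. e \<subseteq> W \<and> card e = 2}"

text \<open>In each round Waiter offers two distinct free edges e, f; Client colours one
  of them red and the other one becomes blue.\<close>

fun waiter_forces :: "'b set \<Rightarrow> ('b set set \<Rightarrow> 'b set set \<Rightarrow> bool) \<Rightarrow> nat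
    \<Rightarrow> 'b set set \<Rightarrow> 'b set set \<Rightarrow> bool" where
  "waiter_forces W P 0 Red Blue = P Red Blue"
| "waiter_forces W P (Suc k) Red Blue =
     (P Red Blue \<or>
      (\<exists>e f. e \<in> Kedges W - (Red \<union> Blue) \<and> f \<in> Kedges W - (Red \<union> Blue) \<and> e \<noteq> f \<and>
         waiter_forces W P k (insert e Red) (insert f Blue) \<and>
         waiter_forces W P k (insert f Red) (insert e Blue)))"

definition good_copy :: "'a set \<Rightarrow> 'a set set \<Rightarrow> 'a set \<Rightarrow> 'b set \<Rightarrow> ('a \<Rightarrow> 'b)
    \<Rightarrow> 'b set set \<Rightarrow> 'b set set \<Rightarrow> bool" where
  "good_copy V E R W \<rho> Red Blue \<longleftrightarrow>
     (\<exists>\<phi>. inj_on \<phi> V \<and> \<phi> ` V \<subseteq> W \<and>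
        (\<forall>u v. {u, v} \<in> E \<longrightarrow> {\<phi> u, \<phi> v} \<in> Red) \<and>
        (\<forall>r\<in>R. \<phi> r = \<rho> r) \<and>
        (\<forall>e\<in>Red \<union> Blue. \<exists>x\<in>e. x \<in> \<phi> ` (V - leaves V E R)) \<and>
        (\<forall>x\<in>V - leaves V E R.
           card {y\<in>W - \<phi> ` V. {\<phi> x, y} \<in> Blue} \<le> maxdeg V E))"

end

theory Submission
  imports Defs
begin


lemma wf_mono: "waiter_forces W P k Red Blue \<Longrightarrow> k \<le> k' \<Longrightarrow> waiter_forces W P k' Red Blue"
proof (induction k arbitrary: k' Red Blue)
  case 0
  then show ?case by (cases k') auto
next
  case (Suc k)
  then obtain k'' where k': "k' = Suc k''" "k \<le> k''" by (cases k') auto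
  have IH: "\<And>Red Blue. waiter_forces W P k Red Blue \<Longrightarrow> waiter_forces W P k'' Red Blue"
    using Suc.IH k'(2) by blast
  from Suc.prems(1) show ?case unfolding k' waiter_forces.simps using IH by blast
qed

lemma wf_round:
  assumes "e \<in> Kedges W" "f \<in> Kedges W" "e \<notin> Red \<union> Blue" "f \<notin> Red \<union> Blue" "e \<noteq> f"
    "waiter_forces W P k (insert e Red) (insert f Blue)"
    "waiter_forces W P k (insert f Red) (insert e Blue)"
  shows "waiter_forces W P (Suc k) Red Blue"
  using assms by auto

lemma card2_eq: "card e = 2 \<Longrightarrow> a \<in> e \<Longrightarrow> b \<in> e \<Longrightarrow> a \<noteq> b \<Longrightarrow> e = {a,b}"
  by (auto simp: card_2_iff)

lemma two_elems: "2 \<le> card A \<Longrightarrow> \<exists>a b. a \<in> A \<and> b \<in> A \<and> a \<noteq> b"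
proof -
  assume "2 \<le> card A"
  then have "A \<noteq> {}" by auto
  then obtain a where a: "a \<in> A" by auto
  have "finite A" using \<open>2 \<le> card A\<close> card.infinite by force
  then have "card (A - {a}) \<ge> 1" using a \<open>2 \<le> card A\<close> by auto
  then obtain b where "b \<in> A - {a}" by (metis One_nat_def card.empty ex_in_conv not_one_le_zero)
  then show ?thesis using a by auto
qed

lemma Kedges_pair: "a \<in> W \<Longrightarrow> b \<in> W \<Longrightarrow> a \<noteq> b \<Longrightarrow> {a,b} \<in> Kedges W"
  by (auto simp: Kedges_def)

locale WC =
  fixes V :: "'a set" and W :: "'b set" and E0 :: "'a set set" and R0 :: "'a set"
    and \<rho>0 :: "'a \<Rightarrow> 'b" and par :: "'a \<Rightarrow> 'a" and D :: "'a \<Rightarrow> nat"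
    and Q :: "('a \<times> 'a) set" and \<Delta> :: nat and L0 :: "'a set"
  assumes finV: "finite V" and finW: "finite W" and R0V: "R0 \<subseteq> V"
    and parV: "\<And>w. w \<in> V \<Longrightarrow> w \<notin> R0 \<Longrightarrow> par w \<in> V"
    and D0: "\<And>w. w \<in> V \<Longrightarrow> D w = 0 \<longleftrightarrow> w \<in> R0"
    and Dpar: "\<And>w. w \<in> V \<Longrightarrow> w \<notin> R0 \<Longrightarrow> Suc (D (par w)) = D w"
    and QV: "Q \<subseteq> V \<times> V" and finQ: "finite Q"
    and Qnr: "\<And>g v. (g,v) \<in> Q \<Longrightarrow> v \<notin> R0 \<and> par v \<notin> R0 \<and> par (par v) \<notin> R0 \<and> g \<notin> R0"
    and Qrt1: "\<And>g v g' v'. (g,v) \<in> Q \<Longrightarrow> (g',v') \<in> Q \<Longrightarrow> (par^^D g) g \<noteq> (par^^D v') v'"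
    and Qrt2: "\<And>g v g' v'. (g,v) \<in> Q \<Longrightarrow> (g',v') \<in> Q \<Longrightarrow> (par^^D v) v = (par^^D v') v' \<Longrightarrow> g = g' \<and> v = v'"
    and Qrt3: "\<And>g v g' v'. (g,v) \<in> Q \<Longrightarrow> (g',v') \<in> Q \<Longrightarrow> (par^^D g) g = (par^^D g') g' \<Longrightarrow> g = g' \<and> v = v'"
    and degb: "\<And>x. x \<in> V \<Longrightarrow> card {w \<in> V - R0. par w = x} + (if x \<notin> R0 then 1 else 0)
                 + (if x \<in> fst ` Q \<union> snd ` Q then 1 else 0) \<le> \<Delta>"
    and nl1: "\<And>w. w \<in> V \<Longrightarrow> w \<notin> R0 \<Longrightarrow> par w \<notin> L0"
    and nl2: "\<And>g v. (g,v) \<in> Q \<Longrightarrow> g \<notin> L0"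
    and E0cov: "\<And>e. e \<in> E0 \<Longrightarrow> (\<exists>w \<in> V - R0. e = {w, par w}) \<or> (\<exists>(g,v) \<in> Q. e = {g,v})"
    and sizeW: "card V + \<Delta> \<le> card W"
    and inj0: "inj_on \<rho>0 R0" and img0: "\<rho>0 ` R0 \<subseteq> W"
    and Ddef: "\<Delta> = maxdeg V E0" and Ldef: "L0 = leaves V E0 R0"
begin

definition rt where "rt w = (par^^D w) w"
definition chs where "chs R x = {w \<in> V - R. par w = x}"
definition cands :: "('a \<times> 'a) set \<Rightarrow> ('a \<Rightarrow> 'b \<times> 'b) \<Rightarrow> 'b set" where
  "cands Q2 cand = (\<Union>p\<in>Q2. {fst (cand (snd p)), snd (cand (snd p))})"
definition Fr where "Fr R \<rho> Q2 cand = W - \<rho> ` R - cands Q2 cand"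
definition col where "col R \<rho> Red Blue x = {y \<in> W - \<rho> ` R. {\<rho> x, y} \<in> Red \<union> Blue}"
definition blu where "blu R \<rho> Blue x = {y \<in> W - \<rho> ` R. {\<rho> x, y} \<in> Blue}"

lemma rt_par: "w \<in> V \<Longrightarrow> w \<notin> R0 \<Longrightarrow> rt (par w) = rt w"
  unfolding rt_def using Dpar[of w] by (metis funpow_Suc_right o_apply)

lemma par_neq: "w \<in> V \<Longrightarrow> w \<notin> R0 \<Longrightarrow> par w \<noteq> w"
  using Dpar[of w] by auto

lemma Q_in: "(g,v) \<in> Q \<Longrightarrow> g \<in> V \<and> v \<in> V \<and> par v \<in> V"
  using QV Qnr parV by blast

lemma Q_inj_v: "p \<in> Q \<Longrightarrow> p' \<in> Q \<Longrightarrow> snd p = snd p' \<Longrightarrow> p = p'"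
  using Qrt2 by (cases p; cases p') auto

lemma Q_inj_g: "p \<in> Q \<Longrightarrow> p' \<in> Q \<Longrightarrow> fst p = fst p' \<Longrightarrow> p = p'"
  using Qrt3 by (cases p; cases p') auto

lemma Q_inj_c: "p \<in> Q \<Longrightarrow> p' \<in> Q \<Longrightarrow> par (snd p) = par (snd p') \<Longrightarrow> p = p'"
proof -
  assume a: "p \<in> Q" "p' \<in> Q" "par (snd p) = par (snd p')"
  obtain g v g' v' where p: "p = (g,v)" "p' = (g',v')" by (cases p; cases p')
  have "rt v = rt v'" using rt_par[of v] rt_par[of v'] a Q_in[of g v] Q_in[of g' v'] Qnr[of g v] Qnr[of g' v'] p
    by auto
  then show ?thesis using Qrt2[of g v g' v'] a p unfolding rt_def by auto
qed

lemma Q_vc_disj: "p \<in> Q \<Longrightarrow> p' \<in> Q \<Longrightarrow> snd p \<noteq> par (snd p')"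
proof
  assume a: "p \<in> Q" "p' \<in> Q" "snd p = par (snd p')"
  obtain g v g' v' where p: "p = (g,v)" "p' = (g',v')" by (cases p; cases p')
  have "rt v = rt v'" using rt_par[of v'] a Q_in[of g' v'] Qnr[of g' v'] p by auto
  then have "p = p'" using Qrt2[of g v g' v'] a p unfolding rt_def by auto
  then show False using a p par_neq[of v] Q_in[of g v] Qnr[of g v] by auto
qed

lemma card_vc: assumes "Q' \<subseteq> Q"
  shows "card (snd ` Q' \<union> (\<lambda>p. par (snd p)) ` Q') = 2 * card Q'"
proof -
  have fin: "finite Q'" using assms finQ finite_subset by auto
  have i1: "inj_on snd Q'" using Q_inj_v assms by (meson inj_onI subsetD)
  have i2: "inj_on (\<lambda>p. par (snd p)) Q'" using Q_inj_c assms by (meson inj_onI subsetD)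
  have dj: "snd ` Q' \<inter> (\<lambda>p. par (snd p)) ` Q' = {}" using Q_vc_disj assms by blast
  show ?thesis using card_Un_disjoint[OF finite_imageI[OF fin] finite_imageI[OF fin] dj]
      card_image[OF i1] card_image[OF i2] by simp
qed

lemma find_node:
  assumes "R0 \<subseteq> R" "w0 \<in> V" "w0 \<notin> R"
  shows "\<exists>w \<in> V - R. par w \<in> R \<and> rt w = rt w0"
  using assms(2,3)
proof (induction "D w0" arbitrary: w0 rule: less_induct)
  case less
  have nr: "w0 \<notin> R0" using less.prems assms(1) by auto
  show ?case
  proof (cases "par w0 \<in> R")
    case True then show ?thesis using less.prems by auto
  next
    case False
    have "D (par w0) < D w0" using Dpar[of w0] nr less.prems by auto
    then obtain w where "w \<in> V - R" "par w \<in> R" "rt w = rt (par w0)"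
      using less.hyps[of "par w0"] False parV[of w0] nr less.prems by auto
    then show ?thesis using rt_par[of w0] nr less.prems by auto
  qed
qed

definition Inv where "Inv R \<rho> Q1 Q2 cand Red Blue \<longleftrightarrow>
  R0 \<subseteq> R \<and> R \<subseteq> V \<and> inj_on \<rho> R \<and> \<rho> ` R \<subseteq> W \<and> (\<forall>r\<in>R0. \<rho> r = \<rho>0 r) \<and>
  Red \<union> Blue \<subseteq> Kedges W \<and>
  (\<forall>w \<in> R - R0. par w \<in> R \<and> {\<rho> w, \<rho> (par w)} \<in> Red) \<and>
  Q1 \<inter> Q2 = {} \<and> Q1 \<subseteq> Q \<and> Q2 \<subseteq> Q \<and>
  (\<forall>p \<in> Q - Q1 - Q2. fst p \<in> R \<and> snd p \<in> R \<and> {\<rho> (fst p), \<rho> (snd p)} \<in> Red) \<and>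
  (\<forall>e \<in> Red \<union> Blue. \<exists>x \<in> R - L0. \<rho> x \<in> e) \<and>
  (\<forall>x \<in> R - L0. card (blu R \<rho> Blue x) + card (chs R x) + (if x \<in> fst ` Q1 then 2 else 0) \<le> \<Delta>) \<and>
  (\<forall>x \<in> R. chs R x \<noteq> {} \<longrightarrow> card (col R \<rho> Red Blue x) + card (chs R x) + (if x \<notin> R0 then 1 else 0) \<le> \<Delta>) \<and>
  (\<forall>x \<in> R. \<forall>y \<in> W - \<rho> ` R. {\<rho> x, y} \<in> Red \<longrightarrow> x \<in> fst ` (Q - Q1)) \<and>
  (\<forall>p \<in> Q1 \<union> Q2. snd p \<notin> R \<and> par (snd p) \<notin> R) \<and>
  (\<forall>p \<in> Q2. fst p \<in> R \<and> fst (cand (snd p)) \<noteq> snd (cand (snd p)) \<and>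
      fst (cand (snd p)) \<in> W - \<rho> ` R \<and> snd (cand (snd p)) \<in> W - \<rho> ` R \<and>
      {\<rho> (fst p), fst (cand (snd p))} \<in> Red \<and> {\<rho> (fst p), snd (cand (snd p))} \<in> Red) \<and>
  (\<forall>p \<in> Q2. \<forall>p' \<in> Q2. p \<noteq> p' \<longrightarrow>
      {fst (cand (snd p)), snd (cand (snd p))} \<inter> {fst (cand (snd p')), snd (cand (snd p'))} = {})"

lemma InvD1: assumes "Inv R \<rho> Q1 Q2 cand Red Blue" shows "R0 \<subseteq> R"
  using assms unfolding Inv_def by (elim conjE) assumption

lemma InvD2: assumes "Inv R \<rho> Q1 Q2 cand Red Blue" shows "R \<subseteq> V"
  using assms unfolding Inv_def by (elim conjE) assumption

lemma InvD3: assumes "Inv R \<rho> Q1 Q2 cand Red Blue" shows "inj_on \<rho> R"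
  using assms unfolding Inv_def by (elim conjE) assumption

lemma InvD4: assumes "Inv R \<rho> Q1 Q2 cand Red Blue" shows "\<rho> ` R \<subseteq> W"
  using assms unfolding Inv_def by (elim conjE) assumption

lemma InvD5: assumes "Inv R \<rho> Q1 Q2 cand Red Blue" shows "\<forall>r\<in>R0. \<rho> r = \<rho>0 r"
  using assms unfolding Inv_def by (elim conjE) assumption

lemma InvD6: assumes "Inv R \<rho> Q1 Q2 cand Red Blue" shows "Red \<union> Blue \<subseteq> Kedges W"
  using assms unfolding Inv_def by (elim conjE) assumption

lemma InvD7: assumes "Inv R \<rho> Q1 Q2 cand Red Blue" shows "\<forall>w \<in> R - R0. par w \<in> R \<and> {\<rho> w, \<rho> (par w)} \<in> Red"
  using assms unfolding Inv_def by (elim conjE) assumption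

lemma InvD8: assumes "Inv R \<rho> Q1 Q2 cand Red Blue" shows "Q1 \<inter> Q2 = {}"
  using assms unfolding Inv_def by (elim conjE) assumption

lemma InvD9: assumes "Inv R \<rho> Q1 Q2 cand Red Blue" shows "Q1 \<subseteq> Q"
  using assms unfolding Inv_def by (elim conjE) assumption

lemma InvD10: assumes "Inv R \<rho> Q1 Q2 cand Red Blue" shows "Q2 \<subseteq> Q"
  using assms unfolding Inv_def by (elim conjE) assumption

lemma InvD11: assumes "Inv R \<rho> Q1 Q2 cand Red Blue" shows "\<forall>p \<in> Q - Q1 - Q2. fst p \<in> R \<and> snd p \<in> R \<and> {\<rho> (fst p), \<rho> (snd p)} \<in> Red"
  using assms unfolding Inv_def by (elim conjE) assumption

lemma InvD12: assumes "Inv R \<rho> Q1 Q2 cand Red Blue" shows "\<forall>e \<in> Red \<union> Blue. \<exists>x \<in> R - L0. \<rho> x \<in> e"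
  using assms unfolding Inv_def by (elim conjE) assumption

lemma InvD13: assumes "Inv R \<rho> Q1 Q2 cand Red Blue" shows "\<forall>x \<in> R - L0. card (blu R \<rho> Blue x) + card (chs R x) + (if x \<in> fst ` Q1 then 2 else 0) \<le> \<Delta>"
  using assms unfolding Inv_def by (elim conjE) assumption

lemma InvD14: assumes "Inv R \<rho> Q1 Q2 cand Red Blue" shows "\<forall>x \<in> R. chs R x \<noteq> {} \<longrightarrow> card (col R \<rho> Red Blue x) + card (chs R x) + (if x \<notin> R0 then 1 else 0) \<le> \<Delta>"
  using assms unfolding Inv_def by (elim conjE) assumption

lemma InvD15: assumes "Inv R \<rho> Q1 Q2 cand Red Blue" shows "\<forall>x \<in> R. \<forall>y \<in> W - \<rho> ` R. {\<rho> x, y} \<in> Red \<longrightarrow> x \<in> fst ` (Q - Q1)"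
  using assms unfolding Inv_def by (elim conjE) assumption

lemma InvD16: assumes "Inv R \<rho> Q1 Q2 cand Red Blue" shows "\<forall>p \<in> Q1 \<union> Q2. snd p \<notin> R \<and> par (snd p) \<notin> R"
  using assms unfolding Inv_def by (elim conjE) assumption

lemma InvD17: assumes "Inv R \<rho> Q1 Q2 cand Red Blue" shows "\<forall>p \<in> Q2. fst p \<in> R \<and> fst (cand (snd p)) \<noteq> snd (cand (snd p)) \<and>
      fst (cand (snd p)) \<in> W - \<rho> ` R \<and> snd (cand (snd p)) \<in> W - \<rho> ` R \<and>
      {\<rho> (fst p), fst (cand (snd p))} \<in> Red \<and> {\<rho> (fst p), snd (cand (snd p))} \<in> Red"
  using assms unfolding Inv_def by (elim conjE) assumption

lemma InvD18: assumes "Inv R \<rho> Q1 Q2 cand Red Blue" shows "\<forall>p \<in> Q2. \<forall>p' \<in> Q2. p \<noteq> p' \<longrightarrow>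
      {fst (cand (snd p)), snd (cand (snd p))} \<inter> {fst (cand (snd p')), snd (cand (snd p'))} = {}"
  using assms unfolding Inv_def by (elim conjE) assumption

lemmas InvD = InvD1 InvD2 InvD3 InvD4 InvD5 InvD6 InvD7 InvD8 InvD9 InvD10 InvD11 InvD12 InvD13 InvD14 InvD15 InvD16 InvD17 InvD18

lemma fresh_edge:
  assumes "Inv R \<rho> Q1 Q2 cand Red Blue" "e \<in> Red \<union> Blue" "s \<in> e" "s \<notin> \<rho> ` R"
  shows "\<exists>z\<in>R. e = {s, \<rho> z}"
proof -
  obtain z where z: "z \<in> R" "\<rho> z \<in> e" using InvD(12)[OF assms(1)] assms(2) by blast
  have "card e = 2" using InvD(6)[OF assms(1)] assms(2) unfolding Kedges_def by auto
  then have "e = {s, \<rho> z}" using card2_eq[of e s "\<rho> z"] z assms(3,4) by auto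
  then show ?thesis using z by auto
qed

lemma fin_blu: "finite (blu R \<rho> Blue x)" unfolding blu_def using finW by auto
lemma fin_col: "finite (col R \<rho> Red Blue x)" unfolding col_def using finW by auto
lemma fin_chs: "finite (chs R x)" unfolding chs_def using finV by auto

lemma chs_sub: "R0 \<subseteq> R \<Longrightarrow> chs R x \<subseteq> {w \<in> V - R0. par w = x}"
  unfolding chs_def by auto

lemma card_chs0: "R0 \<subseteq> R \<Longrightarrow> card (chs R x) \<le> card {w \<in> V - R0. par w = x}"
  by (rule card_mono) (use finV chs_sub in auto)


lemma M1_inv:
  assumes I: "Inv R \<rho> Q1 Q2 cand Red Blue"
    and x: "x \<in> R" and w: "w \<in> V" "w \<notin> R" "par w = x"
    and wq: "w \<notin> snd ` (Q1 \<union> Q2)" "w \<notin> (\<lambda>p. par (snd p)) ` (Q1 \<union> Q2)"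
    and s: "s \<in> Fr R \<rho> Q2 cand" "s' \<in> Fr R \<rho> Q2 cand" "s \<noteq> s'"
    and fr: "{\<rho> x, s} \<notin> Red \<union> Blue" "{\<rho> x, s'} \<notin> Red \<union> Blue"
  shows "Inv (insert w R) (\<rho>(w := s)) Q1 Q2 cand (insert {\<rho> x, s} Red) (insert {\<rho> x, s'} Blue)"
proof -
  let ?R = "insert w R" and ?r = "\<rho>(w := s)" and ?Red = "insert {\<rho> x, s} Red"
    and ?Blue = "insert {\<rho> x, s'} Blue"
  note I0 = InvD[OF I]
  have sW: "s \<in> W" "s \<notin> \<rho> ` R" "s \<notin> cands Q2 cand" "s' \<in> W" "s' \<notin> \<rho> ` R" "s' \<notin> cands Q2 cand"
    using s unfolding Fr_def by auto
  have wR0: "w \<notin> R0" using w I0(1) by auto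
  have xL: "x \<notin> L0" using nl1[OF w(1) wR0] w(3) by simp
  have img: "?r ` R = \<rho> ` R" using w(2) by auto
  have img': "?r ` ?R = insert s (\<rho> ` R)" using w(2) by auto
  have rx: "?r x = \<rho> x" using x w(2) by auto
  have req: "\<And>u. u \<in> R \<Longrightarrow> ?r u = \<rho> u" using w(2) by auto
  have xs: "\<rho> x \<noteq> s" "\<rho> x \<noteq> s'" using sW x by auto
  have xW: "\<rho> x \<in> W" using x I0(4) by auto
  have wch: "w \<in> chs R x" unfolding chs_def using w by auto
  have chsx: "chs ?R x = chs R x - {w}" unfolding chs_def by auto
  have chsy: "\<And>y. chs ?R y \<subseteq> chs R y" unfolding chs_def by auto
  have cardx: "card (chs ?R x) + 1 = card (chs R x)"
    using chsx wch fin_chs[of R x] by (simp add: card_Diff_singleton) (metis Suc_pred card_gt_0_iff empty_iff)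
  have sold: "\<And>e. e \<in> Red \<union> Blue \<Longrightarrow> s \<in> e \<Longrightarrow> \<exists>z\<in>R. e = {s, \<rho> z}"
    using fresh_edge[OF I] sW by blast
  have blu_w: "blu ?R ?r ?Blue w = {}"
  proof -
    { fix z assume z: "z \<in> W - ?r ` ?R" "{?r w, z} \<in> ?Blue"
      then have zz: "z \<notin> \<rho> ` R" "z \<noteq> s" using img' by auto
      have "{s, z} \<in> ?Blue" using z by simp
      then have False
      proof
        assume "{s, z} = {\<rho> x, s'}" then show False using xs sW(2) x \<open>s \<noteq> s'\<close> by (auto simp: doubleton_eq_iff)
      next
        assume "{s,z} \<in> Blue"
        then obtain q where "q \<in> R" "{s, z} = {s, \<rho> q}" using sold by blast
        then show False using zz by (auto simp: doubleton_eq_iff)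
      qed }
    then show ?thesis unfolding blu_def by auto
  qed
  have col_w: "col ?R ?r ?Red ?Blue w = {}"
  proof -
    { fix z assume z: "z \<in> W - ?r ` ?R" "{?r w, z} \<in> ?Red \<union> ?Blue"
      then have zz: "z \<notin> \<rho> ` R" "z \<noteq> s" using img' by auto
      have "{s, z} \<in> ?Red \<union> ?Blue" using z by simp
      then have False
      proof (elim UnE insertE)
        assume "{s, z} = {\<rho> x, s'}" then show False using xs sW(2) x \<open>s \<noteq> s'\<close> by (auto simp: doubleton_eq_iff)
      next
        assume "{s, z} = {\<rho> x, s}" then show False using xs x zz by (auto simp: doubleton_eq_iff)
      next
        assume "{s,z} \<in> Blue"
        then obtain q where "q \<in> R" "{s, z} = {s, \<rho> q}" using sold by blast
        then show False using zz by (auto simp: doubleton_eq_iff)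
      next
        assume "{s,z} \<in> Red"
        then obtain q where "q \<in> R" "{s, z} = {s, \<rho> q}" using sold by blast
        then show False using zz by (auto simp: doubleton_eq_iff)
      qed }
    then show ?thesis unfolding col_def by auto
  qed
  have blu_x: "blu ?R ?r ?Blue x \<subseteq> insert s' (blu R \<rho> Blue x)"
    unfolding blu_def using img' rx by (auto simp: doubleton_eq_iff)
  have col_x: "col ?R ?r ?Red ?Blue x \<subseteq> insert s' (col R \<rho> Red Blue x)"
    unfolding col_def using img' rx by (auto simp: doubleton_eq_iff)
  have blu_y: "\<And>y. y \<in> R \<Longrightarrow> y \<noteq> x \<Longrightarrow> blu ?R ?r ?Blue y \<subseteq> blu R \<rho> Blue y"
  proof -
    fix y assume y: "y \<in> R" "y \<noteq> x"
    have "\<rho> y \<noteq> \<rho> x" using y x I0(3) by (meson inj_onD)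
    moreover have "\<rho> y \<noteq> s'" using y sW by auto
    ultimately show "blu ?R ?r ?Blue y \<subseteq> blu R \<rho> Blue y"
      unfolding blu_def using img' req[OF y(1)] by (auto simp: doubleton_eq_iff)
  qed
  have col_y: "\<And>y. y \<in> R \<Longrightarrow> y \<noteq> x \<Longrightarrow> col ?R ?r ?Red ?Blue y \<subseteq> col R \<rho> Red Blue y"
  proof -
    fix y assume y: "y \<in> R" "y \<noteq> x"
    have "\<rho> y \<noteq> \<rho> x" using y x I0(3) by (meson inj_onD)
    moreover have "\<rho> y \<noteq> s'" "\<rho> y \<noteq> s" using y sW by auto
    ultimately show "col ?R ?r ?Red ?Blue y \<subseteq> col R \<rho> Red Blue y"
      unfolding col_def using img' req[OF y(1)] by (auto simp: doubleton_eq_iff)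
  qed
  have degw: "card {u \<in> V - R0. par u = w} + 1 + (if w \<in> fst ` Q then 1 else 0) \<le> \<Delta>"
    using degb[OF w(1)] wR0 by (auto split: if_splits)
  have chw: "card (chs ?R w) \<le> card {u \<in> V - R0. par u = w}"
    using card_chs0[of ?R w] I0(1) by auto
  show ?thesis unfolding Inv_def
  proof (intro conjI)
    show "R0 \<subseteq> ?R" using I0(1) by auto
    show "?R \<subseteq> V" using I0(2) w by auto
    show "inj_on ?r ?R" using I0(3) w(2) sW(2) by (auto simp: inj_on_def)
    show "?r ` ?R \<subseteq> W" using img' I0(4) sW by auto
    show "\<forall>r\<in>R0. ?r r = \<rho>0 r" using I0(5) I0(1) w(2) by auto
    show "?Red \<union> ?Blue \<subseteq> Kedges W" using I0(6) Kedges_pair xW sW xs by auto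
    show "\<forall>u \<in> ?R - R0. par u \<in> ?R \<and> {?r u, ?r (par u)} \<in> ?Red"
    proof
      fix u assume u: "u \<in> ?R - R0"
      show "par u \<in> ?R \<and> {?r u, ?r (par u)} \<in> ?Red"
      proof (cases "u = w")
        case True then show ?thesis using w x rx by (auto simp: insert_commute)
      next
        case False
        then have "u \<in> R - R0" using u by auto
        then show ?thesis using I0(7) req by auto
      qed
    qed
    show "Q1 \<inter> Q2 = {}" "Q1 \<subseteq> Q" "Q2 \<subseteq> Q" using I0 by auto
    show "\<forall>p \<in> Q - Q1 - Q2. fst p \<in> ?R \<and> snd p \<in> ?R \<and> {?r (fst p), ?r (snd p)} \<in> ?Red"
      using I0(11) req by auto
    show "\<forall>e \<in> ?Red \<union> ?Blue. \<exists>y \<in> ?R - L0. ?r y \<in> e"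
    proof
      fix e assume "e \<in> ?Red \<union> ?Blue"
      then consider "e = {\<rho> x, s}" | "e = {\<rho> x, s'}" | "e \<in> Red \<union> Blue" by auto
      then show "\<exists>y \<in> ?R - L0. ?r y \<in> e"
      proof cases
        case 3 then obtain y where "y \<in> R - L0" "\<rho> y \<in> e" using I0(12) by blast
        then show ?thesis using req w(2) by (intro bexI[of _ y]) auto
      qed (use x xL rx w(2) in \<open>(intro bexI[of _ x]; auto)+\<close>)
    qed
    show "\<forall>y \<in> ?R - L0. card (blu ?R ?r ?Blue y) + card (chs ?R y) + (if y \<in> fst ` Q1 then 2 else 0) \<le> \<Delta>"
    proof
      fix y assume y: "y \<in> ?R - L0"
      show "card (blu ?R ?r ?Blue y) + card (chs ?R y) + (if y \<in> fst ` Q1 then 2 else 0) \<le> \<Delta>"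
      proof (cases "y = w")
        case True
        have "fst ` Q1 \<subseteq> fst ` Q" using I0(9) by auto
        then show ?thesis using True blu_w chw degw by (auto split: if_splits)
      next
        case False
        then have yR: "y \<in> R - L0" using y by auto
        note old = I0(13)[rule_format, OF yR]
        show ?thesis
        proof (cases "y = x")
          case True
          have "card (blu ?R ?r ?Blue x) \<le> card (insert s' (blu R \<rho> Blue x))"
            by (rule card_mono) (use blu_x fin_blu in auto)
          also have "\<dots> \<le> card (blu R \<rho> Blue x) + 1" by (simp add: card_insert_le_m1 fin_blu card_insert_if)
          finally show ?thesis using True old cardx by simp
        next
          case False
          have "card (blu ?R ?r ?Blue y) \<le> card (blu R \<rho> Blue y)"
            by (rule card_mono) (use blu_y[of y] yR False fin_blu in auto)
          moreover have "card (chs ?R y) \<le> card (chs R y)"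
            by (rule card_mono) (use chsy fin_chs in auto)
          ultimately show ?thesis using old by simp
        qed
      qed
    qed
    show "\<forall>y \<in> ?R. chs ?R y \<noteq> {} \<longrightarrow> card (col ?R ?r ?Red ?Blue y) + card (chs ?R y) + (if y \<notin> R0 then 1 else 0) \<le> \<Delta>"
    proof (intro ballI impI)
      fix y assume y: "y \<in> ?R" and ne: "chs ?R y \<noteq> {}"
      show "card (col ?R ?r ?Red ?Blue y) + card (chs ?R y) + (if y \<notin> R0 then 1 else 0) \<le> \<Delta>"
      proof (cases "y = w")
        case True
        then show ?thesis using col_w chw degw wR0 by (auto split: if_splits)
      next
        case False
        then have yR: "y \<in> R" using y by auto
        show ?thesis
        proof (cases "y = x")
          case True
          note old = I0(14)[rule_format, OF x] 
          have "chs R x \<noteq> {}" using wch by auto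
          note old = old[OF this]
          have "card (col ?R ?r ?Red ?Blue x) \<le> card (insert s' (col R \<rho> Red Blue x))"
            by (rule card_mono) (use col_x fin_col in auto)
          also have "\<dots> \<le> card (col R \<rho> Red Blue x) + 1" by (simp add: fin_col card_insert_if)
          finally show ?thesis using True old cardx by simp
        next
          case False
          have "chs R y \<noteq> {}" using ne chsy by blast
          note old = I0(14)[rule_format, OF yR this]
          have "card (col ?R ?r ?Red ?Blue y) \<le> card (col R \<rho> Red Blue y)"
            by (rule card_mono) (use col_y[of y] yR False fin_col in auto)
          moreover have "card (chs ?R y) \<le> card (chs R y)"
            by (rule card_mono) (use chsy fin_chs in auto)
          ultimately show ?thesis using old by simp
        qed
      qed
    qed
    show "\<forall>y \<in> ?R. \<forall>z \<in> W - ?r ` ?R. {?r y, z} \<in> ?Red \<longrightarrow> y \<in> fst ` (Q - Q1)"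
    proof (intro ballI impI)
      fix y z assume y: "y \<in> ?R" and z: "z \<in> W - ?r ` ?R" and red: "{?r y, z} \<in> ?Red"
      have zz: "z \<notin> \<rho> ` R" "z \<noteq> s" using z img' by auto
      show "y \<in> fst ` (Q - Q1)"
      proof (cases "{?r y, z} = {\<rho> x, s}")
        case True then show ?thesis using zz x by (auto simp: doubleton_eq_iff)
      next
        case False
        then have r: "{?r y, z} \<in> Red" using red by auto
        show ?thesis
        proof (cases "y = w")
          case True
          then obtain q where "q \<in> R" "{?r y, z} = {s, \<rho> q}" using sold r by auto
          then show ?thesis using zz True by (auto simp: doubleton_eq_iff)
        next
          case False
          then have "y \<in> R" using y by auto
          then show ?thesis using I0(15) r zz z req by auto
        qed
      qed
    qed
    show "\<forall>p \<in> Q1 \<union> Q2. snd p \<notin> ?R \<and> par (snd p) \<notin> ?R" using I0(16) wq by force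
    show "\<forall>p \<in> Q2. fst p \<in> ?R \<and> fst (cand (snd p)) \<noteq> snd (cand (snd p)) \<and>
      fst (cand (snd p)) \<in> W - ?r ` ?R \<and> snd (cand (snd p)) \<in> W - ?r ` ?R \<and>
      {?r (fst p), fst (cand (snd p))} \<in> ?Red \<and> {?r (fst p), snd (cand (snd p))} \<in> ?Red"
    proof
      fix p assume p: "p \<in> Q2"
      have "fst (cand (snd p)) \<noteq> s" "snd (cand (snd p)) \<noteq> s"
        using sW(3) p unfolding cands_def by auto
      then show "fst p \<in> ?R \<and> fst (cand (snd p)) \<noteq> snd (cand (snd p)) \<and>
      fst (cand (snd p)) \<in> W - ?r ` ?R \<and> snd (cand (snd p)) \<in> W - ?r ` ?R \<and>
      {?r (fst p), fst (cand (snd p))} \<in> ?Red \<and> {?r (fst p), snd (cand (snd p))} \<in> ?Red"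
        using I0(17) p img' req by auto
    qed
    show "\<forall>p \<in> Q2. \<forall>p' \<in> Q2. p \<noteq> p' \<longrightarrow>
      {fst (cand (snd p)), snd (cand (snd p))} \<inter> {fst (cand (snd p')), snd (cand (snd p'))} = {}"
      using I0(18) by blast
  qed
qed


lemma gadget_inv:
  assumes I: "Inv R \<rho> Q1 Q2 cand Red Blue"
    and p: "p \<in> Q1" "fst p \<in> R" "chs R (fst p) = {}"
    and y: "y1 \<in> Fr R \<rho> Q2 cand" "y2 \<in> Fr R \<rho> Q2 cand" "y1 \<noteq> y2"
    and z: "z1 \<in> W - \<rho> ` R" "z2 \<in> W - \<rho> ` R"
  shows "Inv R \<rho> (Q1 - {p}) (insert p Q2) (cand(snd p := (y1, y2)))
     (insert {\<rho> (fst p), y2} (insert {\<rho> (fst p), y1} Red))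
     (insert {\<rho> (fst p), z2} (insert {\<rho> (fst p), z1} Blue))"
proof -
  let ?g = "fst p"
  let ?Red = "insert {\<rho> ?g, y2} (insert {\<rho> ?g, y1} Red)"
    and ?Blue = "insert {\<rho> ?g, z2} (insert {\<rho> ?g, z1} Blue)"
    and ?c = "cand(snd p := (y1, y2))"
  note I0 = InvD[OF I]
  have yW: "y1 \<in> W" "y1 \<notin> \<rho> ` R" "y1 \<notin> cands Q2 cand" "y2 \<in> W" "y2 \<notin> \<rho> ` R" "y2 \<notin> cands Q2 cand"
    using y unfolding Fr_def by auto
  have pQ: "p \<in> Q" "p \<notin> Q2" using p I0(8,9) by auto
  have gL: "?g \<notin> L0" using nl2[of "fst p" "snd p"] pQ by auto
  have gW: "\<rho> ?g \<in> W" using p I0(4) by auto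
  have gne: "\<rho> ?g \<noteq> y1" "\<rho> ?g \<noteq> y2" "\<rho> ?g \<noteq> z1" "\<rho> ?g \<noteq> z2" using yW z p by auto
  have gQ1: "?g \<notin> fst ` (Q1 - {p})"
  proof
    assume "?g \<in> fst ` (Q1 - {p})"
    then obtain p' where "p' \<in> Q1 - {p}" "fst p' = fst p" by (metis imageE)
    then show False using Q_inj_g[of p' p] pQ I0(9) by auto
  qed
  have cother: "\<And>p'. p' \<in> Q2 \<Longrightarrow> ?c (snd p') = cand (snd p')"
    using Q_inj_v pQ I0(10) by (metis fun_upd_other subsetD)
  show ?thesis unfolding Inv_def
  proof (intro conjI)
    show "R0 \<subseteq> R" "R \<subseteq> V" "inj_on \<rho> R" "\<rho> ` R \<subseteq> W" "\<forall>r\<in>R0. \<rho> r = \<rho>0 r" using I0 by auto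
    show "?Red \<union> ?Blue \<subseteq> Kedges W" using I0(6) Kedges_pair gW yW z gne by auto
    show "\<forall>w \<in> R - R0. par w \<in> R \<and> {\<rho> w, \<rho> (par w)} \<in> ?Red" using I0(7) by auto
    show "(Q1 - {p}) \<inter> insert p Q2 = {}" "Q1 - {p} \<subseteq> Q" "insert p Q2 \<subseteq> Q" using I0(8,9,10) pQ by auto
    show "\<forall>p' \<in> Q - (Q1 - {p}) - insert p Q2. fst p' \<in> R \<and> snd p' \<in> R \<and> {\<rho> (fst p'), \<rho> (snd p')} \<in> ?Red"
      using I0(11) by auto
    show "\<forall>e \<in> ?Red \<union> ?Blue. \<exists>x \<in> R - L0. \<rho> x \<in> e"
      using I0(12) p(2) gL by blast
    show "\<forall>x \<in> R - L0. card (blu R \<rho> ?Blue x) + card (chs R x) + (if x \<in> fst ` (Q1 - {p}) then 2 else 0) \<le> \<Delta>"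
    proof
      fix x assume x: "x \<in> R - L0"
      note old = I0(13)[rule_format, OF x]
      show "card (blu R \<rho> ?Blue x) + card (chs R x) + (if x \<in> fst ` (Q1 - {p}) then 2 else 0) \<le> \<Delta>"
      proof (cases "x = ?g")
        case True
        have "blu R \<rho> ?Blue x \<subseteq> insert z1 (insert z2 (blu R \<rho> Blue x))"
          unfolding blu_def using True by (auto simp: doubleton_eq_iff)
        then have "card (blu R \<rho> ?Blue x) \<le> card (insert z1 (insert z2 (blu R \<rho> Blue x)))"
          by (intro card_mono) (auto simp: fin_blu)
        also have "\<dots> \<le> card (blu R \<rho> Blue x) + 2" by (simp add: fin_blu card_insert_if)
        finally show ?thesis using old True gQ1 p(1) by auto
      next
        case False
        have "\<rho> x \<noteq> \<rho> ?g" using False x p(2) I0(3) by (meson DiffD1 inj_onD)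
        then have "blu R \<rho> ?Blue x \<subseteq> blu R \<rho> Blue x"
          unfolding blu_def using z x by (auto simp: doubleton_eq_iff)
        then have "card (blu R \<rho> ?Blue x) \<le> card (blu R \<rho> Blue x)"
          by (intro card_mono) (auto simp: fin_blu)
        moreover have "(if x \<in> fst ` (Q1 - {p}) then 2 else 0) \<le> (if x \<in> fst ` Q1 then 2 else (0::nat))"
          by auto
        ultimately show ?thesis using old by linarith
      qed
    qed
    show "\<forall>x \<in> R. chs R x \<noteq> {} \<longrightarrow> card (col R \<rho> ?Red ?Blue x) + card (chs R x) + (if x \<notin> R0 then 1 else 0) \<le> \<Delta>"
    proof (intro ballI impI)
      fix x assume x: "x \<in> R" and ne: "chs R x \<noteq> {}"
      note old = I0(14)[rule_format, OF x ne]
      have "x \<noteq> ?g" using ne p(3) by auto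
      then have "\<rho> x \<noteq> \<rho> ?g" using x p(2) I0(3) by (meson inj_onD)
      then have "col R \<rho> ?Red ?Blue x \<subseteq> col R \<rho> Red Blue x"
        unfolding col_def using z x yW by (auto simp: doubleton_eq_iff)
      then have "card (col R \<rho> ?Red ?Blue x) \<le> card (col R \<rho> Red Blue x)"
        by (intro card_mono) (auto simp: fin_col)
      then show "card (col R \<rho> ?Red ?Blue x) + card (chs R x) + (if x \<notin> R0 then 1 else 0) \<le> \<Delta>"
        using old by linarith
    qed
    show "\<forall>x \<in> R. \<forall>y \<in> W - \<rho> ` R. {\<rho> x, y} \<in> ?Red \<longrightarrow> x \<in> fst ` (Q - (Q1 - {p}))"
    proof (intro ballI impI)
      fix x yy assume x: "x \<in> R" and yy: "yy \<in> W - \<rho> ` R" and r: "{\<rho> x, yy} \<in> ?Red"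
      show "x \<in> fst ` (Q - (Q1 - {p}))"
      proof (cases "{\<rho> x, yy} \<in> Red")
        case True then show ?thesis using I0(15) x yy by blast
      next
        case False
        then have "\<rho> x = \<rho> ?g" using r yy x yW by (auto simp: doubleton_eq_iff)
        then have "x = ?g" using x p(2) I0(3) by (meson inj_onD)
        then show ?thesis using pQ by auto
      qed
    qed
    show "\<forall>p' \<in> Q1 - {p} \<union> insert p Q2. snd p' \<notin> R \<and> par (snd p') \<notin> R" using I0(16) p by auto
    show "\<forall>p' \<in> insert p Q2. fst p' \<in> R \<and> fst (?c (snd p')) \<noteq> snd (?c (snd p')) \<and>
      fst (?c (snd p')) \<in> W - \<rho> ` R \<and> snd (?c (snd p')) \<in> W - \<rho> ` R \<and>
      {\<rho> (fst p'), fst (?c (snd p'))} \<in> ?Red \<and> {\<rho> (fst p'), snd (?c (snd p'))} \<in> ?Red"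
    proof
      fix p' assume p': "p' \<in> insert p Q2"
      show "fst p' \<in> R \<and> fst (?c (snd p')) \<noteq> snd (?c (snd p')) \<and>
      fst (?c (snd p')) \<in> W - \<rho> ` R \<and> snd (?c (snd p')) \<in> W - \<rho> ` R \<and>
      {\<rho> (fst p'), fst (?c (snd p'))} \<in> ?Red \<and> {\<rho> (fst p'), snd (?c (snd p'))} \<in> ?Red"
      proof (cases "p' = p")
        case True then show ?thesis using p yW y by auto
      next
        case False then have "p' \<in> Q2" using p' by auto
        then show ?thesis using I0(17) cother by auto
      qed
    qed
    show "\<forall>p1 \<in> insert p Q2. \<forall>p2 \<in> insert p Q2. p1 \<noteq> p2 \<longrightarrow>
      {fst (?c (snd p1)), snd (?c (snd p1))} \<inter> {fst (?c (snd p2)), snd (?c (snd p2))} = {}"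
    proof (intro ballI impI)
      fix p1 p2 assume p1: "p1 \<in> insert p Q2" and p2: "p2 \<in> insert p Q2" and ne: "p1 \<noteq> p2"
      have cq: "\<And>q. q \<in> Q2 \<Longrightarrow> fst (cand (snd q)) \<in> cands Q2 cand \<and> snd (cand (snd q)) \<in> cands Q2 cand"
        unfolding cands_def by auto
      show "{fst (?c (snd p1)), snd (?c (snd p1))} \<inter> {fst (?c (snd p2)), snd (?c (snd p2))} = {}"
      proof (cases "p1 = p")
        case True
        then have "p2 \<in> Q2" using p2 ne by auto
        then show ?thesis using True cother cq[of p2] yW by auto
      next
        case False
        then have q1: "p1 \<in> Q2" using p1 by auto
        show ?thesis
        proof (cases "p2 = p")
          case True
          then show ?thesis using q1 cother cq[of p1] yW by auto
        next
          case False
          then have "p2 \<in> Q2" using p2 by auto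
          then show ?thesis using I0(18) q1 ne cother by auto
        qed
      qed
    qed
  qed
qed


lemma macro_inv:
  assumes I: "Inv R \<rho> {} Q2 cand Red Blue"
    and p: "p \<in> Q2" and x: "x \<in> R" "par (par (snd p)) = x"
    and s: "s \<in> Fr R \<rho> Q2 cand" "s' \<in> Fr R \<rho> Q2 cand" "s \<noteq> s'"
    and fr: "{\<rho> x, s} \<notin> Red \<union> Blue" "{\<rho> x, s'} \<notin> Red \<union> Blue"
    and y: "{y, y'} = {fst (cand (snd p)), snd (cand (snd p))}" "y \<noteq> y'"
  shows "Inv (insert (snd p) (insert (par (snd p)) R)) (\<rho>(par (snd p) := s, snd p := y)) {} (Q2 - {p}) cand
     (insert {s, y} (insert {\<rho> x, s} Red)) (insert {s, y'} (insert {\<rho> x, s'} Blue))"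
proof -
  define v where "v = snd p"
  define c where "c = par v"
  define g where "g = fst p"
  let ?R = "insert v (insert c R)" and ?r = "\<rho>(c := s, v := y)"
    and ?Red = "insert {s, y} (insert {\<rho> x, s} Red)"
    and ?Blue = "insert {s, y'} (insert {\<rho> x, s'} Blue)"
  note I0 = InvD[OF I]
  have pQ: "p \<in> Q" using p I0(10) by auto
  have gv: "(g, v) \<in> Q" using pQ unfolding g_def v_def by simp
  have vV: "v \<in> V" "c \<in> V" and vR0: "v \<notin> R0" "c \<notin> R0" "x \<notin> R0"
    using Q_in[OF gv] Qnr[OF gv] x unfolding c_def v_def by auto
  have cx: "par c = x" using x unfolding c_def v_def by simp
  have vR: "v \<notin> R" "c \<notin> R" using I0(16) p unfolding v_def c_def by auto
  have cv: "c \<noteq> v" using par_neq[OF vV(1) vR0(1)] unfolding c_def by auto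
  have xcv: "x \<noteq> c" "x \<noteq> v" using x vR by auto
  have sW: "s \<in> W" "s \<notin> \<rho> ` R" "s \<notin> cands Q2 cand" "s' \<in> W" "s' \<notin> \<rho> ` R" "s' \<notin> cands Q2 cand"
    using s unfolding Fr_def by auto
  have candp: "fst (cand v) \<in> cands Q2 cand" "snd (cand v) \<in> cands Q2 cand"
    using p unfolding cands_def v_def by force+
  have yc: "y \<in> cands Q2 cand" "y' \<in> cands Q2 cand" using y candp unfolding v_def
    by (auto simp: doubleton_eq_iff)
  have ys: "y \<noteq> s" "y' \<noteq> s" "y \<noteq> s'" "y' \<noteq> s'" using yc sW by auto
  have J17p: "g \<in> R" "fst (cand v) \<in> W - \<rho> ` R" "snd (cand v) \<in> W - \<rho> ` R"
     "{\<rho> g, fst (cand v)} \<in> Red" "{\<rho> g, snd (cand v)} \<in> Red"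
    using I0(17) p unfolding g_def v_def by auto
  have yy: "y \<in> {fst (cand v), snd (cand v)}" "y' \<in> {fst (cand v), snd (cand v)}"
    using y(1) unfolding v_def by blast+
  have yW: "y \<in> W" "y \<notin> \<rho> ` R" "y' \<in> W" "y' \<notin> \<rho> ` R" "{\<rho> g, y} \<in> Red" "{\<rho> g, y'} \<in> Red"
  proof -
    show "y \<in> W" using yy J17p by blast
    show "y \<notin> \<rho> ` R" using yy J17p by (metis DiffD2 insertE empty_iff)
    show "y' \<in> W" using yy J17p by blast
    show "y' \<notin> \<rho> ` R" using yy J17p by (metis DiffD2 insertE empty_iff)
    show "{\<rho> g, y} \<in> Red" using yy J17p by blast
    show "{\<rho> g, y'} \<in> Red" using yy J17p by blast
  qed
  have xL: "x \<notin> L0" using nl1[OF vV(2) vR0(2)] cx by simp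
  have cL: "c \<notin> L0" using nl1[OF vV(1) vR0(1)] unfolding c_def by simp
  have img': "?r ` ?R = insert y (insert s (\<rho> ` R))" using vR cv by auto
  have rc: "?r c = s" "?r v = y" using cv by auto
  have req: "\<And>u. u \<in> R \<Longrightarrow> ?r u = \<rho> u" using vR by auto
  have xs: "\<rho> x \<noteq> s" "\<rho> x \<noteq> s'" "\<rho> x \<noteq> y" "\<rho> x \<noteq> y'" using sW yW x by auto
  have xW: "\<rho> x \<in> W" using x I0(4) by auto
  have vch: "v \<in> chs R c" unfolding chs_def c_def using vV vR0 vR by auto
  have cch: "c \<in> chs R x" unfolding chs_def using vV vR cx by auto
  have pcc: "par c \<noteq> c" using par_neq[OF vV(2) vR0(2)] .
  have chsx: "chs ?R x = chs R x - {c}" unfolding chs_def using cv vch cx xcv pcc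
    by (auto simp: chs_def c_def)
  have chsc: "chs ?R c = chs R c - {v}" unfolding chs_def using pcc by auto
  have chsy: "\<And>u. chs ?R u \<subseteq> chs R u" unfolding chs_def by auto
  have cardx: "card (chs ?R x) + 1 = card (chs R x)"
    using chsx cch fin_chs[of R x] by (simp add: card_Diff_singleton) (metis Suc_pred card_gt_0_iff empty_iff)
  have cardc: "card (chs ?R c) + 1 = card (chs R c)"
    using chsc vch fin_chs[of R c] by (simp add: card_Diff_singleton) (metis Suc_pred card_gt_0_iff empty_iff)
  have sold: "\<And>e. e \<in> Red \<union> Blue \<Longrightarrow> s \<in> e \<Longrightarrow> \<exists>z\<in>R. e = {s, \<rho> z}"
    using fresh_edge[OF I] sW by blast
  have yold: "\<And>e. e \<in> Red \<union> Blue \<Longrightarrow> y \<in> e \<Longrightarrow> \<exists>z\<in>R. e = {y, \<rho> z}"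
    using fresh_edge[OF I] yW by blast
  have degc: "card {u \<in> V - R0. par u = c} + 1 \<le> \<Delta>"
    using degb[OF vV(2)] vR0 by (auto split: if_splits)
  have vQ: "v \<in> fst ` Q \<union> snd ` Q" using gv by force
  have degv: "card {u \<in> V - R0. par u = v} + 2 \<le> \<Delta>"
    using degb[OF vV(1)] vR0 vQ by (auto split: if_splits)
  have chc: "card (chs R c) \<le> card {u \<in> V - R0. par u = c}"
    using card_chs0[of R c] I0(1) by auto
  have chv: "card (chs ?R v) \<le> card {u \<in> V - R0. par u = v}"
    using card_chs0[of ?R v] I0(1) by auto
  have col_c: "col ?R ?r ?Red ?Blue c \<subseteq> {y'}"
  proof
    fix z assume "z \<in> col ?R ?r ?Red ?Blue c"
    then have z: "z \<in> W" "z \<notin> \<rho> ` R" "z \<noteq> s" "z \<noteq> y" "{s, z} \<in> ?Red \<union> ?Blue"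
      unfolding col_def using img' rc by auto
    show "z \<in> {y'}"
    proof (cases "{s, z} \<in> Red \<union> Blue")
      case True
      then obtain q where "q \<in> R" "{s, z} = {s, \<rho> q}" using sold by blast
      then show ?thesis using z by (auto simp: doubleton_eq_iff)
    next
      case False
      then show ?thesis using z xs sW s(3) x(1) by (auto simp: doubleton_eq_iff)
    qed
  qed
  have col_v: "col ?R ?r ?Red ?Blue v = {}"
  proof -
    { fix z assume "z \<in> col ?R ?r ?Red ?Blue v"
      then have z: "z \<in> W" "z \<notin> \<rho> ` R" "z \<noteq> s" "z \<noteq> y" "{y, z} \<in> ?Red \<union> ?Blue"
        unfolding col_def using img' rc by auto
      have False
      proof (cases "{y, z} \<in> Red \<union> Blue")
        case True
        then obtain q where "q \<in> R" "{y, z} = {y, \<rho> q}" using yold by blast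
        then show ?thesis using z by (auto simp: doubleton_eq_iff)
      next
        case False
        then show ?thesis using z xs ys y(2) by (auto simp: doubleton_eq_iff)
      qed }
    then show ?thesis by auto
  qed
  have blu_sub: "\<And>u. blu ?R ?r ?Blue u \<subseteq> col ?R ?r ?Red ?Blue u" unfolding blu_def col_def by auto
  have col_x: "col ?R ?r ?Red ?Blue x \<subseteq> insert s' (col R \<rho> Red Blue x)"
    unfolding col_def using img' req[OF x(1)] xs ys by (auto simp: doubleton_eq_iff)
  have blu_x: "blu ?R ?r ?Blue x \<subseteq> insert s' (blu R \<rho> Blue x)"
    unfolding blu_def using img' req[OF x(1)] xs ys by (auto simp: doubleton_eq_iff)
  have col_u: "\<And>u. u \<in> R \<Longrightarrow> u \<noteq> x \<Longrightarrow> col ?R ?r ?Red ?Blue u \<subseteq> col R \<rho> Red Blue u"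
  proof -
    fix u assume u: "u \<in> R" "u \<noteq> x"
    have "\<rho> u \<noteq> \<rho> x" using u x I0(3) by (meson inj_onD)
    moreover have "\<rho> u \<noteq> s'" "\<rho> u \<noteq> s" "\<rho> u \<noteq> y" "\<rho> u \<noteq> y'" using u sW yW by auto
    ultimately show "col ?R ?r ?Red ?Blue u \<subseteq> col R \<rho> Red Blue u"
      unfolding col_def using img' req[OF u(1)] by (auto simp: doubleton_eq_iff)
  qed
  have blu_u: "\<And>u. u \<in> R \<Longrightarrow> u \<noteq> x \<Longrightarrow> blu ?R ?r ?Blue u \<subseteq> blu R \<rho> Blue u"
  proof -
    fix u assume u: "u \<in> R" "u \<noteq> x"
    have "\<rho> u \<noteq> \<rho> x" using u x I0(3) by (meson inj_onD)
    moreover have "\<rho> u \<noteq> s'" "\<rho> u \<noteq> s" "\<rho> u \<noteq> y" "\<rho> u \<noteq> y'" using u sW yW by auto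
    ultimately show "blu ?R ?r ?Blue u \<subseteq> blu R \<rho> Blue u"
      unfolding blu_def using img' req[OF u(1)] by (auto simp: doubleton_eq_iff)
  qed
  have card_le1: "card (col ?R ?r ?Red ?Blue c) \<le> 1"
    using card_mono[OF _ col_c] by auto
  have cblu_c: "card (blu ?R ?r ?Blue c) \<le> 1"
    using card_mono[OF fin_col blu_sub[of c]] card_le1 by linarith
  have cblu_v: "card (blu ?R ?r ?Blue v) = 0"
    using card_mono[OF fin_col blu_sub[of v]] col_v by simp
  show ?thesis unfolding Inv_def v_def[symmetric] c_def[symmetric]
  proof (intro conjI)
    show "R0 \<subseteq> ?R" using I0(1) by auto
    show "?R \<subseteq> V" using I0(2) vV by auto
    show "inj_on ?r ?R" using I0(3) vR sW(2) yW(2) ys cv by (auto simp: inj_on_def)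
    show "?r ` ?R \<subseteq> W" using img' I0(4) sW yW by auto
    show "\<forall>r\<in>R0. ?r r = \<rho>0 r" using I0(5) I0(1) vR by auto
    have "{s, y} \<in> Kedges W" "{s, y'} \<in> Kedges W"
      using Kedges_pair[of s W y] Kedges_pair[of s W y'] sW yW ys by auto
    then show "?Red \<union> ?Blue \<subseteq> Kedges W" using I0(6) Kedges_pair xW sW yW xs ys by auto
    show "\<forall>u \<in> ?R - R0. par u \<in> ?R \<and> {?r u, ?r (par u)} \<in> ?Red"
    proof
      fix u assume u: "u \<in> ?R - R0"
      show "par u \<in> ?R \<and> {?r u, ?r (par u)} \<in> ?Red"
      proof (cases "u = v")
        case True then show ?thesis using cv rc unfolding c_def by (auto simp: insert_commute)
      next
        case False
        show ?thesis
        proof (cases "u = c")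
          case True then show ?thesis using cx x xcv rc by (auto simp: insert_commute)
        next
          case False
          then have "u \<in> R - R0" using u \<open>u \<noteq> v\<close> by auto
          then show ?thesis using I0(7) req by auto
        qed
      qed
    qed
    show "{} \<inter> (Q2 - {p}) = {}" "{} \<subseteq> Q" "Q2 - {p} \<subseteq> Q" using I0 by auto
    show "\<forall>q \<in> Q - {} - (Q2 - {p}). fst q \<in> ?R \<and> snd q \<in> ?R \<and> {?r (fst q), ?r (snd q)} \<in> ?Red"
    proof
      fix q assume q: "q \<in> Q - {} - (Q2 - {p})"
      show "fst q \<in> ?R \<and> snd q \<in> ?R \<and> {?r (fst q), ?r (snd q)} \<in> ?Red"
      proof (cases "q = p")
        case True
        have "?r g = \<rho> g" using req J17p by auto
        then show ?thesis using True J17p yW rc unfolding g_def v_def by auto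
      next
        case False
        then have "q \<in> Q - {} - Q2" using q by auto
        then show ?thesis using I0(11) req by auto
      qed
    qed
    show "\<forall>e \<in> ?Red \<union> ?Blue. \<exists>u \<in> ?R - L0. ?r u \<in> e"
    proof
      fix e assume "e \<in> ?Red \<union> ?Blue"
      then consider "e = {\<rho> x, s}" | "e = {\<rho> x, s'}" | "e = {s, y}" | "e = {s, y'}" | "e \<in> Red \<union> Blue" by auto
      then show "\<exists>u \<in> ?R - L0. ?r u \<in> e"
      proof cases
        case 5 then obtain u where "u \<in> R - L0" "\<rho> u \<in> e" using I0(12) by blast
        then show ?thesis using req by (intro bexI[of _ u]) auto
      qed (use x xL req rc cL in \<open>(intro bexI[of _ x] bexI[of _ c]; auto)+\<close>)
    qed
    show "\<forall>u \<in> ?R - L0. card (blu ?R ?r ?Blue u) + card (chs ?R u) + (if u \<in> fst ` {} then 2 else 0) \<le> \<Delta>"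
    proof
      fix u assume u: "u \<in> ?R - L0"
      show "card (blu ?R ?r ?Blue u) + card (chs ?R u) + (if u \<in> fst ` {} then 2 else 0) \<le> \<Delta>"
      proof (cases "u = v")
        case True then show ?thesis using cblu_v chv degv by simp
      next
        case False
        show ?thesis
        proof (cases "u = c")
          case True then show ?thesis using cblu_c cardc chc degc by simp
        next
          case False
          then have uR: "u \<in> R - L0" using u \<open>u \<noteq> v\<close> by auto
          note old = I0(13)[rule_format, OF uR]
          show ?thesis
          proof (cases "u = x")
            case True
            have "card (blu ?R ?r ?Blue x) \<le> card (insert s' (blu R \<rho> Blue x))"
              by (rule card_mono) (use blu_x fin_blu in auto)
            also have "\<dots> \<le> card (blu R \<rho> Blue x) + 1" by (simp add: fin_blu card_insert_if)
            finally show ?thesis using True old cardx by simp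
          next
            case False
            have "card (blu ?R ?r ?Blue u) \<le> card (blu R \<rho> Blue u)"
              by (rule card_mono) (use blu_u[of u] uR False fin_blu in auto)
            moreover have "card (chs ?R u) \<le> card (chs R u)"
              by (rule card_mono) (use chsy fin_chs in auto)
            ultimately show ?thesis using old by simp
          qed
        qed
      qed
    qed
    show "\<forall>u \<in> ?R. chs ?R u \<noteq> {} \<longrightarrow> card (col ?R ?r ?Red ?Blue u) + card (chs ?R u) + (if u \<notin> R0 then 1 else 0) \<le> \<Delta>"
    proof (intro ballI impI)
      fix u assume u: "u \<in> ?R" and ne: "chs ?R u \<noteq> {}"
      show "card (col ?R ?r ?Red ?Blue u) + card (chs ?R u) + (if u \<notin> R0 then 1 else 0) \<le> \<Delta>"
      proof (cases "u = v")
        case True then show ?thesis using col_v chv degv vR0 by simp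
      next
        case False
        show ?thesis
        proof (cases "u = c")
          case True then show ?thesis using card_le1 cardc chc degc vR0 by simp
        next
          case False
          then have uR: "u \<in> R" using u \<open>u \<noteq> v\<close> by auto
          show ?thesis
          proof (cases "u = x")
            case True
            have "chs R x \<noteq> {}" using cch by auto
            note old = I0(14)[rule_format, OF x(1) this]
            have "card (col ?R ?r ?Red ?Blue x) \<le> card (insert s' (col R \<rho> Red Blue x))"
              by (rule card_mono) (use col_x fin_col in auto)
            also have "\<dots> \<le> card (col R \<rho> Red Blue x) + 1" by (simp add: fin_col card_insert_if)
            finally show ?thesis using True old cardx by simp
          next
            case False
            have "chs R u \<noteq> {}" using ne chsy by blast
            note old = I0(14)[rule_format, OF uR this]
            have "card (col ?R ?r ?Red ?Blue u) \<le> card (col R \<rho> Red Blue u)"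
              by (rule card_mono) (use col_u[of u] uR False fin_col in auto)
            moreover have "card (chs ?R u) \<le> card (chs R u)"
              by (rule card_mono) (use chsy fin_chs in auto)
            ultimately show ?thesis using old by simp
          qed
        qed
      qed
    qed
    show "\<forall>u \<in> ?R. \<forall>z \<in> W - ?r ` ?R. {?r u, z} \<in> ?Red \<longrightarrow> u \<in> fst ` (Q - {})"
    proof (intro ballI impI)
      fix u z assume u: "u \<in> ?R" and z: "z \<in> W - ?r ` ?R" and red: "{?r u, z} \<in> ?Red"
      have zz: "z \<notin> \<rho> ` R" "z \<noteq> s" "z \<noteq> y" using z img' by auto
      show "u \<in> fst ` (Q - {})"
      proof (cases "{?r u, z} \<in> Red")
        case False
        then show ?thesis using red zz x(1) by (auto simp: doubleton_eq_iff)
      next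
        case True
        show ?thesis
        proof (cases "u = v")
          case True
          then obtain q where "q \<in> R" "{?r u, z} = {y, \<rho> q}" using yold \<open>{?r u, z} \<in> Red\<close> rc by auto
          then show ?thesis using zz True rc by (auto simp: doubleton_eq_iff)
        next
          case False
          show ?thesis
          proof (cases "u = c")
            case True
            then obtain q where "q \<in> R" "{?r u, z} = {s, \<rho> q}" using sold \<open>{?r u, z} \<in> Red\<close> rc by auto
            then show ?thesis using zz True rc by (auto simp: doubleton_eq_iff)
          next
            case False
            then have "u \<in> R" using u \<open>u \<noteq> v\<close> by auto
            then show ?thesis using I0(15) \<open>{?r u, z} \<in> Red\<close> zz z req by auto
          qed
        qed
      qed
    qed
    show "\<forall>q \<in> {} \<union> (Q2 - {p}). snd q \<notin> ?R \<and> par (snd q) \<notin> ?R"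
    proof
      fix q assume q: "q \<in> {} \<union> (Q2 - {p})"
      then have qQ: "q \<in> Q" "q \<noteq> p" using I0(10) by auto
      have "snd q \<noteq> v" using Q_inj_v[OF qQ(1) pQ] qQ(2) unfolding v_def by auto
      moreover have "snd q \<noteq> c" using Q_vc_disj[OF qQ(1) pQ] unfolding c_def v_def by auto
      moreover have "par (snd q) \<noteq> c" using Q_inj_c[OF qQ(1) pQ] qQ(2) unfolding c_def v_def by auto
      moreover have "par (snd q) \<noteq> v" using Q_vc_disj[OF pQ qQ(1)] unfolding v_def by auto
      ultimately show "snd q \<notin> ?R \<and> par (snd q) \<notin> ?R" using I0(16) q by auto
    qed
    show "\<forall>q \<in> Q2 - {p}. fst q \<in> ?R \<and> fst (cand (snd q)) \<noteq> snd (cand (snd q)) \<and>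
      fst (cand (snd q)) \<in> W - ?r ` ?R \<and> snd (cand (snd q)) \<in> W - ?r ` ?R \<and>
      {?r (fst q), fst (cand (snd q))} \<in> ?Red \<and> {?r (fst q), snd (cand (snd q))} \<in> ?Red"
    proof
      fix q assume q: "q \<in> Q2 - {p}"
      have c1: "fst (cand (snd q)) \<noteq> s" "snd (cand (snd q)) \<noteq> s"
        using sW(3) q unfolding cands_def by auto
      have "{fst (cand (snd q)), snd (cand (snd q))} \<inter> {fst (cand (snd p)), snd (cand (snd p))} = {}"
        using I0(18) q p by auto
      then have c2: "fst (cand (snd q)) \<noteq> y" "snd (cand (snd q)) \<noteq> y"
        using y(1) by (auto simp: doubleton_eq_iff)
      have "fst q \<in> R" using I0(17) q by auto
      then show "fst q \<in> ?R \<and> fst (cand (snd q)) \<noteq> snd (cand (snd q)) \<and>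
      fst (cand (snd q)) \<in> W - ?r ` ?R \<and> snd (cand (snd q)) \<in> W - ?r ` ?R \<and>
      {?r (fst q), fst (cand (snd q))} \<in> ?Red \<and> {?r (fst q), snd (cand (snd q))} \<in> ?Red"
        using I0(17) q img' req c1 c2 by auto
    qed
    show "\<forall>q \<in> Q2 - {p}. \<forall>q' \<in> Q2 - {p}. q \<noteq> q' \<longrightarrow>
      {fst (cand (snd q)), snd (cand (snd q))} \<inter> {fst (cand (snd q')), snd (cand (snd q'))} = {}"
      using I0(18) by blast
  qed
qed


lemma count_Fr:
  assumes I: "Inv R \<rho> Q1 Q2 cand Red Blue"
  shows "card (V - R) + \<Delta> \<le> card (Fr R \<rho> Q2 cand) + 2 * card Q2"
proof -
  note I0 = InvD[OF I]
  have fQ2: "finite Q2" using I0(10) finQ finite_subset by auto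
  have fR: "finite R" using I0(2) finV finite_subset by auto
  have "card (cands Q2 cand) \<le> (\<Sum>p\<in>Q2. card {fst (cand (snd p)), snd (cand (snd p))})"
    unfolding cands_def by (rule card_UN_le[OF fQ2])
  also have "\<dots> \<le> (\<Sum>p\<in>Q2. 2)" by (rule sum_mono) (simp add: card_insert_if)
  finally have cc: "card (cands Q2 cand) \<le> 2 * card Q2" by simp
  have "W \<subseteq> Fr R \<rho> Q2 cand \<union> \<rho> ` R \<union> cands Q2 cand" unfolding Fr_def by auto
  then have "card W \<le> card (Fr R \<rho> Q2 cand \<union> \<rho> ` R \<union> cands Q2 cand)"
    by (intro card_mono) (auto simp: Fr_def cands_def fR fQ2 finW)
  also have "\<dots> \<le> card (Fr R \<rho> Q2 cand) + card (\<rho> ` R) + card (cands Q2 cand)"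
    by (meson add_le_mono card_Un_le le_refl order_trans)
  also have "card (\<rho> ` R) \<le> card R" by (rule card_image_le[OF fR])
  finally have "card W \<le> card (Fr R \<rho> Q2 cand) + card R + 2 * card Q2" using cc by linarith
  moreover have "card V = card R + card (V - R)"
    using card_Diff_subset[OF fR I0(2)] card_mono[OF finV I0(2)] by simp
  ultimately show ?thesis using sizeW by linarith
qed

lemma count_free:
  "card (Fr R \<rho> Q2 cand) \<le> card {s \<in> Fr R \<rho> Q2 cand. {\<rho> x, s} \<notin> Red \<union> Blue} + card (col R \<rho> Red Blue x)"
proof -
  have "Fr R \<rho> Q2 cand \<subseteq> {s \<in> Fr R \<rho> Q2 cand. {\<rho> x, s} \<notin> Red \<union> Blue} \<union> col R \<rho> Red Blue x"
    unfolding col_def Fr_def by auto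
  then have "card (Fr R \<rho> Q2 cand) \<le> card ({s \<in> Fr R \<rho> Q2 cand. {\<rho> x, s} \<notin> Red \<union> Blue} \<union> col R \<rho> Red Blue x)"
    by (intro card_mono) (auto simp: Fr_def col_def finW)
  also have "\<dots> \<le> card {s \<in> Fr R \<rho> Q2 cand. {\<rho> x, s} \<notin> Red \<union> Blue} + card (col R \<rho> Red Blue x)"
    by (rule card_Un_le)
  finally show ?thesis .
qed

lemma vc_sub:
  assumes I: "Inv R \<rho> Q1 Q2 cand Red Blue" and "Q' \<subseteq> Q1 \<union> Q2"
  shows "snd ` Q' \<union> (\<lambda>p. par (snd p)) ` Q' \<subseteq> V - R"
proof -
  note I0 = InvD[OF I]
  { fix p assume p: "p \<in> Q'"
    then have "p \<in> Q" using assms(2) I0(9,10) by auto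
    then have "snd p \<in> V" "par (snd p) \<in> V" using Q_in[of "fst p" "snd p"] by auto
    moreover have "snd p \<notin> R" "par (snd p) \<notin> R" using I0(16) p assms(2) by auto
    ultimately have "snd p \<in> V - R" "par (snd p) \<in> V - R" by auto }
  then show ?thesis by auto
qed

lemma card_VR:
  assumes I: "Inv R \<rho> Q1 Q2 cand Red Blue" and "Q' \<subseteq> Q1 \<union> Q2"
  shows "2 * card Q' \<le> card (V - R)"
proof -
  have "Q' \<subseteq> Q" using assms InvD(9,10)[OF I] by auto
  then have "2 * card Q' = card (snd ` Q' \<union> (\<lambda>p. par (snd p)) ` Q')" using card_vc by auto
  also have "\<dots> \<le> card (V - R)" by (rule card_mono) (use vc_sub[OF assms] finV in auto)
  finally show ?thesis .
qed

lemma card_VR1: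
  assumes I: "Inv R \<rho> Q1 Q2 cand Red Blue" and w: "w \<in> V - R"
    "w \<notin> snd ` Q2" "w \<notin> (\<lambda>p. par (snd p)) ` Q2"
  shows "2 * card Q2 + 1 \<le> card (V - R)"
proof -
  have "Q2 \<subseteq> Q" using InvD(10)[OF I] by auto
  then have c: "2 * card Q2 = card (snd ` Q2 \<union> (\<lambda>p. par (snd p)) ` Q2)" using card_vc by auto
  have f: "finite (snd ` Q2 \<union> (\<lambda>p. par (snd p)) ` Q2)" using \<open>Q2 \<subseteq> Q\<close> finQ finite_subset by auto
  have "2 * card Q2 + 1 = card (insert w (snd ` Q2 \<union> (\<lambda>p. par (snd p)) ` Q2))"
    using c f w by simp
  also have "\<dots> \<le> card (V - R)" by (rule card_mono) (use vc_sub[OF I, of Q2] w finV in auto)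
  finally show ?thesis .
qed

lemma M1_cnt:
  assumes I: "Inv R \<rho> Q1 Q2 cand Red Blue" and x: "x \<in> R" and w: "w \<in> chs R x"
    and n: "2 * card Q2 + (if x \<notin> R0 then 0 else 1) \<le> card (V - R)"
  shows "2 \<le> card {s \<in> Fr R \<rho> Q2 cand. {\<rho> x, s} \<notin> Red \<union> Blue}"
proof -
  have ne: "chs R x \<noteq> {}" using w by auto
  have h: "1 \<le> card (chs R x)" using w fin_chs[of R x] by (metis One_nat_def Suc_leI card_gt_0_iff ne)
  have J: "card (col R \<rho> Red Blue x) + card (chs R x) + (if x \<notin> R0 then 1 else 0) \<le> \<Delta>"
    using InvD(14)[OF I] x ne by auto
  show ?thesis using count_Fr[OF I] count_free[of R \<rho> Q2 cand x Red Blue] J h n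
    by (cases "x \<in> R0") auto
qed

lemma pick_round:
  assumes cnt: "2 \<le> card {s \<in> F. {a, s} \<notin> Red \<union> Blue}" and F: "F \<subseteq> W" "a \<in> W" "a \<notin> F"
    and br: "\<And>s s'. s \<in> F \<Longrightarrow> s' \<in> F \<Longrightarrow> s \<noteq> s' \<Longrightarrow> {a,s} \<notin> Red \<union> Blue \<Longrightarrow> {a,s'} \<notin> Red \<union> Blue
       \<Longrightarrow> waiter_forces W P k (insert {a,s} Red) (insert {a,s'} Blue)"
  shows "waiter_forces W P (Suc k) Red Blue"
proof -
  obtain s1 s2 where s: "s1 \<in> {s \<in> F. {a, s} \<notin> Red \<union> Blue}" "s2 \<in> {s \<in> F. {a, s} \<notin> Red \<union> Blue}" "s1 \<noteq> s2"
    using two_elems[OF cnt] by blast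
  show ?thesis
  proof (rule wf_round[of "{a,s1}" W "{a,s2}"])
    show "{a,s1} \<in> Kedges W" "{a,s2} \<in> Kedges W" using s F by (auto intro!: Kedges_pair)
    show "{a,s1} \<notin> Red \<union> Blue" "{a,s2} \<notin> Red \<union> Blue" using s by auto
    show "{a,s1} \<noteq> {a,s2}" using s F by (auto simp: doubleton_eq_iff)
    show "waiter_forces W P k (insert {a,s1} Red) (insert {a,s2} Blue)" using br s by auto
    show "waiter_forces W P k (insert {a,s2} Red) (insert {a,s1} Blue)" using br s by auto
  qed
qed

lemma M1_wf:
  assumes I: "Inv R \<rho> Q1 Q2 cand Red Blue"
    and x: "x \<in> R" and w: "w \<in> V" "w \<notin> R" "par w = x"
    and wq: "w \<notin> snd ` (Q1 \<union> Q2)" "w \<notin> (\<lambda>p. par (snd p)) ` (Q1 \<union> Q2)"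
    and IH: "\<And>\<rho>' Red' Blue'. Inv (insert w R) \<rho>' Q1 Q2 cand Red' Blue' \<Longrightarrow> waiter_forces W P k Red' Blue'"
  shows "waiter_forces W P (Suc k) Red Blue"
proof -
  have wc: "w \<in> chs R x" unfolding chs_def using w by auto
  have "2 * card Q2 + 1 \<le> card (V - R)" using card_VR1[OF I, of w] w wq by auto
  then have cnt: "2 \<le> card {s \<in> Fr R \<rho> Q2 cand. {\<rho> x, s} \<notin> Red \<union> Blue}"
    using M1_cnt[OF I x wc] by (cases "x \<in> R0") auto
  show ?thesis
  proof (rule pick_round[OF cnt])
    show "Fr R \<rho> Q2 cand \<subseteq> W" "\<rho> x \<in> W" "\<rho> x \<notin> Fr R \<rho> Q2 cand"
      using x InvD(4)[OF I] unfolding Fr_def by auto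
    fix s s' assume "s \<in> Fr R \<rho> Q2 cand" "s' \<in> Fr R \<rho> Q2 cand" "s \<noteq> s'"
      "{\<rho> x, s} \<notin> Red \<union> Blue" "{\<rho> x, s'} \<notin> Red \<union> Blue"
    then show "waiter_forces W P k (insert {\<rho> x, s} Red) (insert {\<rho> x, s'} Blue)"
      using IH M1_inv[OF I x w wq] by blast
  qed
qed

lemma gadget_wf:
  assumes I: "Inv R \<rho> Q1 Q2 cand Red Blue"
    and p: "p \<in> Q1" "fst p \<in> R" "chs R (fst p) = {}"
    and IH: "\<And>cand' Red' Blue'. Inv R \<rho> (Q1 - {p}) (insert p Q2) cand' Red' Blue' \<Longrightarrow> waiter_forces W P k Red' Blue'"
  shows "waiter_forces W P (Suc (Suc k)) Red Blue"
proof -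
  note I0 = InvD[OF I]
  define g where "g = fst p"
  have pQ: "p \<in> Q" "p \<notin> Q2" using p I0(8,9) by auto
  have gL: "g \<notin> L0" using nl2[of "fst p" "snd p"] pQ unfolding g_def by auto
  have gR: "g \<in> R" using p g_def by auto
  have gW: "\<rho> g \<in> W" using gR I0(4) by auto
  have colb: "col R \<rho> Red Blue g \<subseteq> blu R \<rho> Blue g"
  proof
    fix y assume y: "y \<in> col R \<rho> Red Blue g"
    show "y \<in> blu R \<rho> Blue g"
    proof (cases "{\<rho> g, y} \<in> Red")
      case True
      then have "g \<in> fst ` (Q - Q1)" using I0(15) gR y unfolding col_def by auto
      then obtain p' where "p' \<in> Q - Q1" "fst p' = g" by (metis imageE)
      then show ?thesis using Q_inj_g[of p' p] pQ p(1) g_def by auto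
    next
      case False then show ?thesis using y unfolding col_def blu_def by auto
    qed
  qed
  have "card (blu R \<rho> Blue g) + 2 \<le> \<Delta>"
    using I0(13) gR gL p(1,3) g_def by force
  then have C: "card (col R \<rho> Red Blue g) + 2 \<le> \<Delta>"
    using card_mono[OF fin_blu colb] by linarith
  have "2 * card (insert p Q2) \<le> card (V - R)" using card_VR[OF I, of "insert p Q2"] p by auto
  moreover have "finite Q2" using I0(10) finQ finite_subset by auto
  ultimately have nn: "2 * card Q2 + 2 \<le> card (V - R)"
    using pQ by (simp add: card_insert_if)
  have F: "\<Delta> + 2 \<le> card (Fr R \<rho> Q2 cand)" using count_Fr[OF I] nn by linarith
  have cnt1: "2 \<le> card {s \<in> Fr R \<rho> Q2 cand. {\<rho> g, s} \<notin> Red \<union> Blue}"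
    using count_free[of R \<rho> Q2 cand g Red Blue] F C by linarith
  have FW: "Fr R \<rho> Q2 cand \<subseteq> W" "\<rho> g \<notin> Fr R \<rho> Q2 cand" using gR unfolding Fr_def by auto
  show ?thesis
  proof (rule pick_round[OF cnt1 FW(1) gW FW(2)])
    fix y1 z1 assume y1: "y1 \<in> Fr R \<rho> Q2 cand" "z1 \<in> Fr R \<rho> Q2 cand" "y1 \<noteq> z1"
      "{\<rho> g, y1} \<notin> Red \<union> Blue" "{\<rho> g, z1} \<notin> Red \<union> Blue"
    let ?Red = "insert {\<rho> g, y1} Red" and ?Blue = "insert {\<rho> g, z1} Blue"
    have "col R \<rho> ?Red ?Blue g \<subseteq> insert y1 (insert z1 (col R \<rho> Red Blue g))"
      unfolding col_def by (auto simp: doubleton_eq_iff)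
    then have "card (col R \<rho> ?Red ?Blue g) \<le> card (insert y1 (insert z1 (col R \<rho> Red Blue g)))"
      by (intro card_mono) (auto simp: fin_col)
    also have "\<dots> \<le> card (col R \<rho> Red Blue g) + 2" by (simp add: fin_col card_insert_if)
    finally have C2: "card (col R \<rho> ?Red ?Blue g) \<le> \<Delta>" using C by linarith
    have cnt2: "2 \<le> card {s \<in> Fr R \<rho> Q2 cand. {\<rho> g, s} \<notin> ?Red \<union> ?Blue}"
      using count_free[of R \<rho> Q2 cand g ?Red ?Blue] F C2 by linarith
    show "waiter_forces W P (Suc k) ?Red ?Blue"
    proof (rule pick_round[OF cnt2 FW(1) gW FW(2)])
      fix y2 z2 assume y2: "y2 \<in> Fr R \<rho> Q2 cand" "z2 \<in> Fr R \<rho> Q2 cand" "y2 \<noteq> z2"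
        "{\<rho> g, y2} \<notin> ?Red \<union> ?Blue" "{\<rho> g, z2} \<notin> ?Red \<union> ?Blue"
      have "y1 \<noteq> y2" using y2 by auto
      then have "Inv R \<rho> (Q1 - {p}) (insert p Q2) (cand(snd p := (y1, y2)))
        (insert {\<rho> g, y2} ?Red) (insert {\<rho> g, z2} ?Blue)"
        using gadget_inv[OF I p, of y1 y2 z1 z2] y1 y2 unfolding g_def Fr_def by auto
      then show "waiter_forces W P k (insert {\<rho> g, y2} ?Red) (insert {\<rho> g, z2} ?Blue)" by (rule IH)
    qed
  qed
qed

lemma macro_wf:
  assumes I: "Inv R \<rho> {} Q2 cand Red Blue"
    and p: "p \<in> Q2" and x: "x \<in> R" "par (par (snd p)) = x"
    and IH: "\<And>\<rho>' Red' Blue'. Inv (insert (snd p) (insert (par (snd p)) R)) \<rho>' {} (Q2 - {p}) cand Red' Blue'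
              \<Longrightarrow> waiter_forces W P k Red' Blue'"
  shows "waiter_forces W P (Suc (Suc k)) Red Blue"
proof -
  note I0 = InvD[OF I]
  have pQ: "p \<in> Q" using p I0(10) by auto
  have xR0: "x \<notin> R0" using Qnr[of "fst p" "snd p"] pQ x by auto
  have cV: "par (snd p) \<in> V" using Q_in[of "fst p" "snd p"] pQ by auto
  have wc: "par (snd p) \<in> chs R x" unfolding chs_def using cV I0(16) p x by auto
  have "2 * card Q2 \<le> card (V - R)" using card_VR[OF I, of Q2] by auto
  then have cnt: "2 \<le> card {s \<in> Fr R \<rho> Q2 cand. {\<rho> x, s} \<notin> Red \<union> Blue}"
    using M1_cnt[OF I x(1) wc] xR0 by auto
  define y1 where "y1 = fst (cand (snd p))"
  define y2 where "y2 = snd (cand (snd p))"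
  have Y: "y1 \<noteq> y2" "y1 \<in> W - \<rho> ` R" "y2 \<in> W - \<rho> ` R"
    using I0(17) p unfolding y1_def y2_def by auto
  have Yc: "y1 \<in> cands Q2 cand" "y2 \<in> cands Q2 cand" using p unfolding cands_def y1_def y2_def by force+
  show ?thesis
  proof (rule pick_round[OF cnt])
    show "Fr R \<rho> Q2 cand \<subseteq> W" "\<rho> x \<in> W" "\<rho> x \<notin> Fr R \<rho> Q2 cand"
      using x I0(4) unfolding Fr_def by auto
    fix s s' assume s: "s \<in> Fr R \<rho> Q2 cand" "s' \<in> Fr R \<rho> Q2 cand" "s \<noteq> s'"
      "{\<rho> x, s} \<notin> Red \<union> Blue" "{\<rho> x, s'} \<notin> Red \<union> Blue"
    let ?Red = "insert {\<rho> x, s} Red" and ?Blue = "insert {\<rho> x, s'} Blue"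
    have sW: "s \<in> W" "s \<notin> \<rho> ` R" "s \<noteq> y1" "s \<noteq> y2" "s' \<noteq> s" "\<rho> x \<noteq> s"
      using s Yc x unfolding Fr_def by auto
    have free: "\<And>yy. yy \<in> W - \<rho> ` R \<Longrightarrow> {s, yy} \<notin> ?Red \<union> ?Blue"
    proof
      fix yy assume yy: "yy \<in> W - \<rho> ` R" and e: "{s, yy} \<in> ?Red \<union> ?Blue"
      show False
      proof (cases "{s, yy} \<in> Red \<union> Blue")
        case True
        then obtain z where "z \<in> R" "{s, yy} = {s, \<rho> z}" using fresh_edge[OF I] sW by blast
        then show False using yy sW by (auto simp: doubleton_eq_iff)
      next
        case False
        then show False using e yy sW x(1) by (auto simp: doubleton_eq_iff)
      qed
    qed
    show "waiter_forces W P (Suc k) ?Red ?Blue"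
    proof (rule wf_round[of "{s, y1}" W "{s, y2}"])
      show "{s, y1} \<in> Kedges W" "{s, y2} \<in> Kedges W" using sW Y by (auto intro!: Kedges_pair)
      show "{s, y1} \<notin> ?Red \<union> ?Blue" "{s, y2} \<notin> ?Red \<union> ?Blue" using free Y by auto
      show "{s, y1} \<noteq> {s, y2}" using Y sW by (auto simp: doubleton_eq_iff)
      have e1: "{y1, y2} = {fst (cand (snd p)), snd (cand (snd p))}" "{y2, y1} = {fst (cand (snd p)), snd (cand (snd p))}"
        unfolding y1_def y2_def by auto
      show "waiter_forces W P k (insert {s, y1} ?Red) (insert {s, y2} ?Blue)"
        using IH macro_inv[OF I p x s e1(1)] Y by blast
      show "waiter_forces W P k (insert {s, y2} ?Red) (insert {s, y1} ?Blue)"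
        using IH macro_inv[OF I p x s e1(2)] Y by blast
    qed
  qed
qed

lemma final:
  assumes I: "Inv R \<rho> {} Q2 cand Red Blue" and VR: "V - R = {}"
  shows "good_copy V E0 R0 W \<rho>0 Red Blue"
proof -
  note I0 = InvD[OF I]
  have RV: "R = V" using VR I0(2) by auto
  have Q2e: "Q2 = {}"
  proof (rule ccontr)
    assume "Q2 \<noteq> {}"
    then obtain p where p: "p \<in> Q2" by auto
    then have "snd p \<in> V" using Q_in[of "fst p" "snd p"] I0(10) by auto
    then show False using I0(16) p RV by auto
  qed
  show ?thesis unfolding good_copy_def
  proof (intro exI[of _ \<rho>] conjI)
    show "inj_on \<rho> V" "\<rho> ` V \<subseteq> W" "\<forall>r\<in>R0. \<rho> r = \<rho>0 r" using I0 RV by auto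
    show "\<forall>u v. {u, v} \<in> E0 \<longrightarrow> {\<rho> u, \<rho> v} \<in> Red"
    proof (intro allI impI)
      fix u v assume e: "{u, v} \<in> E0"
      from E0cov[OF e] show "{\<rho> u, \<rho> v} \<in> Red"
      proof
        assume "\<exists>w\<in>V - R0. {u, v} = {w, par w}"
        then obtain w where w: "w \<in> V - R0" "{u, v} = {w, par w}" by blast
        have "{\<rho> w, \<rho> (par w)} \<in> Red" using I0(7) w RV by auto
        then show ?thesis using w(2) by (auto simp: doubleton_eq_iff insert_commute)
      next
        assume "\<exists>(g, v') \<in> Q. {u, v} = {g, v'}"
        then obtain q where q: "q \<in> Q" "{u, v} = {fst q, snd q}" by auto
        have "{\<rho> (fst q), \<rho> (snd q)} \<in> Red" using I0(11) q Q2e by auto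
        then show ?thesis using q(2) by (auto simp: doubleton_eq_iff insert_commute)
      qed
    qed
    show "\<forall>e\<in>Red \<union> Blue. \<exists>x\<in>e. x \<in> \<rho> ` (V - leaves V E0 R0)"
      using I0(12) RV Ldef by blast
    show "\<forall>x\<in>V - leaves V E0 R0. card {y \<in> W - \<rho> ` V. {\<rho> x, y} \<in> Blue} \<le> maxdeg V E0"
    proof
      fix x assume x: "x \<in> V - leaves V E0 R0"
      have "x \<in> R - L0" using x RV Ldef by auto
      from I0(13)[rule_format, OF this] have "card (blu R \<rho> Blue x) \<le> \<Delta>" by simp
      then show "card {y \<in> W - \<rho> ` V. {\<rho> x, y} \<in> Blue} \<le> maxdeg V E0"
        unfolding blu_def RV Ddef .
    qed
  qed
qed


lemma card_minus1: "w \<in> V - R \<Longrightarrow> card (V - R) = Suc (card (V - insert w R))"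
proof -
  assume w: "w \<in> V - R"
  have "V - insert w R = (V - R) - {w}" by auto
  moreover have "finite (V - R)" using finV by auto
  ultimately show ?thesis using w card_Suc_Diff1[of "V - R" w] by simp
qed

lemma rt_nvc:
  assumes "w \<in> V" "w \<notin> R0" "rt w = rt (fst p)" "p \<in> Q" "Q' \<subseteq> Q"
  shows "w \<notin> snd ` Q'" "w \<notin> (\<lambda>p. par (snd p)) ` Q'"
proof -
  { fix q assume q: "q \<in> Q'" "w = snd q \<or> w = par (snd q)"
    then have qQ: "q \<in> Q" using assms by auto
    have "rt w = rt (snd q)" using q rt_par[of "snd q"] Q_in[of "fst q" "snd q"] Qnr[of "fst q" "snd q"] qQ
      by auto
    then have False using Qrt1[of "fst p" "snd p" "fst q" "snd q"] assms qQ unfolding rt_def by auto }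
  then show "w \<notin> snd ` Q'" "w \<notin> (\<lambda>p. par (snd p)) ` Q'" by auto
qed

theorem strategy:
  "Inv R \<rho> Q1 Q2 cand Red Blue \<Longrightarrow>
   waiter_forces W (good_copy V E0 R0 W \<rho>0) (card (V - R) + 2 * card Q1) Red Blue"
proof (induction "card (V - R) + 2 * card Q1" arbitrary: R \<rho> Q1 Q2 cand Red Blue rule: less_induct)
  case less
  let ?P = "good_copy V E0 R0 W \<rho>0"
  note I = less.prems
  note I0 = InvD[OF I]
  have fQ1: "finite Q1" using I0(9) finQ finite_subset by auto
  show ?case
  proof (cases "Q1 = {}")
    case False
    then obtain p where p: "p \<in> Q1" by auto
    have pQ: "p \<in> Q" using p I0(9) by auto
    define g where "g = fst p"
    have gV: "g \<in> V" using Q_in[of "fst p" "snd p"] pQ g_def by auto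
    show ?thesis
    proof (cases "g \<in> R")
      case False
      obtain w where w: "w \<in> V - R" "par w \<in> R" "rt w = rt g"
        using find_node[OF I0(1) gV False] by blast
      have wR0: "w \<notin> R0" using w I0(1) by auto
      have wq: "w \<notin> snd ` (Q1 \<union> Q2)" "w \<notin> (\<lambda>p. par (snd p)) ` (Q1 \<union> Q2)"
        using rt_nvc[of w p "Q1 \<union> Q2"] w wR0 pQ I0(9,10) g_def by auto
      have m: "card (V - R) + 2 * card Q1 = Suc (card (V - insert w R) + 2 * card Q1)"
        using card_minus1[OF w(1)] by simp
      show ?thesis unfolding m
      proof (rule M1_wf[OF I w(2) _ _ refl wq])
        show "w \<in> V" "w \<notin> R" using w by auto
        fix \<rho>' Red' Blue' assume "Inv (insert w R) \<rho>' Q1 Q2 cand Red' Blue'"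
        then show "waiter_forces W ?P (card (V - insert w R) + 2 * card Q1) Red' Blue'"
          by (rule less.hyps[rotated]) (use m in simp)
      qed
    next
      case True
      show ?thesis
      proof (cases "chs R g = {}")
        case True
        have m: "card (V - R) + 2 * card Q1 = Suc (Suc (card (V - R) + 2 * card (Q1 - {p})))"
          using card_Suc_Diff1[OF fQ1 p] by simp
        show ?thesis unfolding m
        proof (rule gadget_wf[OF I p])
          show "fst p \<in> R" "chs R (fst p) = {}" using \<open>g \<in> R\<close> True g_def by auto
          fix cand' Red' Blue' assume "Inv R \<rho> (Q1 - {p}) (insert p Q2) cand' Red' Blue'"
          then show "waiter_forces W ?P (card (V - R) + 2 * card (Q1 - {p})) Red' Blue'"
            by (rule less.hyps[rotated]) (use m in simp)
        qed
      next
        case False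
        then obtain w where w: "w \<in> V" "w \<notin> R" "par w = g" unfolding chs_def by auto
        have wR0: "w \<notin> R0" using w I0(1) by auto
        have "rt w = rt g" using rt_par[OF w(1) wR0] w by simp
        then have wq: "w \<notin> snd ` (Q1 \<union> Q2)" "w \<notin> (\<lambda>p. par (snd p)) ` (Q1 \<union> Q2)"
          using rt_nvc[of w p "Q1 \<union> Q2"] w wR0 pQ I0(9,10) g_def by auto
        have m: "card (V - R) + 2 * card Q1 = Suc (card (V - insert w R) + 2 * card Q1)"
          using card_minus1[of w R] w by simp
        show ?thesis unfolding m
        proof (rule M1_wf[OF I \<open>g \<in> R\<close> w wq])
          fix \<rho>' Red' Blue' assume "Inv (insert w R) \<rho>' Q1 Q2 cand Red' Blue'"
          then show "waiter_forces W ?P (card (V - insert w R) + 2 * card Q1) Red' Blue'"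
            by (rule less.hyps[rotated]) (use m in simp)
        qed
      qed
    qed
  next
    case True
    note I' = I[unfolded True]
    show ?thesis
    proof (cases "V - R = {}")
      case True
      then have "card (V - R) = 0" by (metis card.empty)
      then show ?thesis using final[OF I' True] \<open>Q1 = {}\<close> by simp
    next
      case False
      then obtain w0 where w0: "w0 \<in> V" "w0 \<notin> R" by auto
      obtain w where w: "w \<in> V - R" "par w \<in> R"
        using find_node[OF I0(1) w0] by blast
      show ?thesis
      proof (cases "w \<in> (\<lambda>p. par (snd p)) ` Q2")
        case True
        then obtain p where p: "p \<in> Q2" "w = par (snd p)" by auto
        have pQ: "p \<in> Q" using p I0(10) by auto
        have vV: "snd p \<in> V" "snd p \<notin> R" using Q_in[of "fst p" "snd p"] pQ I0(16) p by auto
        have cv: "par (snd p) \<noteq> snd p" using par_neq[of "snd p"] vV Qnr[of "fst p" "snd p"] pQ by auto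
        have m1: "card (V - R) = Suc (card (V - insert (par (snd p)) R))"
          using card_minus1[of "par (snd p)" R] w p by auto
        have m2: "card (V - insert (par (snd p)) R) = Suc (card (V - insert (snd p) (insert (par (snd p)) R)))"
          using card_minus1[of "snd p" "insert (par (snd p)) R"] vV cv by auto
        have m: "card (V - R) + 2 * card Q1 = Suc (Suc (card (V - insert (snd p) (insert (par (snd p)) R)) + 2 * card ({}::('a\<times>'a) set)))"
          using m1 m2 \<open>Q1 = {}\<close> by simp
        show ?thesis unfolding m
        proof (rule macro_wf[OF I' p(1) _ refl])
          show "par (par (snd p)) \<in> R" using w p by auto
          fix \<rho>' Red' Blue' assume "Inv (insert (snd p) (insert (par (snd p)) R)) \<rho>' {} (Q2 - {p}) cand Red' Blue'"
          then show "waiter_forces W ?P (card (V - insert (snd p) (insert (par (snd p)) R)) + 2 * card ({}::('a\<times>'a) set)) Red' Blue'"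
            by (rule less.hyps[rotated]) (use m \<open>Q1 = {}\<close> in simp)
        qed
      next
        case False
        have "w \<notin> snd ` Q2" using I0(16) w by auto
        then have wq: "w \<notin> snd ` (Q1 \<union> Q2)" "w \<notin> (\<lambda>p. par (snd p)) ` (Q1 \<union> Q2)"
          using False \<open>Q1 = {}\<close> by auto
        have m: "card (V - R) + 2 * card Q1 = Suc (card (V - insert w R) + 2 * card Q1)"
          using card_minus1[OF w(1)] by simp
        show ?thesis unfolding m
        proof (rule M1_wf[OF I w(2) _ _ refl wq])
          show "w \<in> V" "w \<notin> R" using w by auto
          fix \<rho>' Red' Blue' assume "Inv (insert w R) \<rho>' Q1 Q2 cand Red' Blue'"
          then show "waiter_forces W ?P (card (V - insert w R) + 2 * card Q1) Red' Blue'"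
            by (rule less.hyps[rotated]) (use m in simp)
        qed
      qed
    qed
  qed
qed

lemma init_inv: "Inv R0 \<rho>0 Q Q2 cand {} {}" if "Q2 = {}"
proof -
  have nq: "\<And>x. x \<in> R0 \<Longrightarrow> x \<notin> fst ` Q" using Qnr by force
  show ?thesis unfolding Inv_def that
  proof (intro conjI ballI impI)
    fix x assume x: "x \<in> R0 - L0"
    have "card (chs R0 x) \<le> \<Delta>" using card_chs0[of R0 x] degb[of x] x R0V by fastforce
    then show "card (blu R0 \<rho>0 {} x) + card (chs R0 x) + (if x \<in> fst ` Q then 2 else 0) \<le> \<Delta>"
      using nq[of x] x by (simp add: blu_def)
  next
    fix x assume x: "x \<in> R0"
    have "card (chs R0 x) \<le> \<Delta>" using card_chs0[of R0 x] degb[of x] x R0V by fastforce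
    then show "card (col R0 \<rho>0 {} {} x) + card (chs R0 x) + (if x \<notin> R0 then 1 else 0) \<le> \<Delta>"
      using x by (simp add: col_def)
  next
    fix p assume "p \<in> Q \<union> {}"
    then show "snd p \<notin> R0" "par (snd p) \<notin> R0" using Qnr[of "fst p" "snd p"] by auto
  qed (use R0V inj0 img0 Qnr in auto)
qed

corollary main: "waiter_forces W (good_copy V E0 R0 W \<rho>0) (card (V - R0) + 2 * card Q) {} {}"
  using strategy[OF init_inv[OF refl]] .

end



fun wk :: "'a set set \<Rightarrow> 'a list \<Rightarrow> bool" where
  "wk E [] = False"
| "wk E [x] = True"
| "wk E (x # y # xs) = ({x, y} \<in> E \<and> wk E (y # xs))"

lemma walk_Cons2: "walk E (x # y # xs) \<longleftrightarrow> {x, y} \<in> E \<and> walk E (y # xs)"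
proof
  assume a: "walk E (x # y # xs)"
  have "{x, y} \<in> E" using a unfolding walk_def by (drule_tac conjunct2, drule_tac x=0 in spec) simp
  moreover have "walk E (y # xs)" unfolding walk_def
  proof (intro conjI allI impI)
    fix i assume "Suc i < length (y # xs)"
    then show "{(y # xs) ! i, (y # xs) ! Suc i} \<in> E"
      using a unfolding walk_def by (drule_tac conjunct2, drule_tac x="Suc i" in spec) simp
  qed simp
  ultimately show "{x, y} \<in> E \<and> walk E (y # xs)" ..
next
  assume a: "{x, y} \<in> E \<and> walk E (y # xs)"
  show "walk E (x # y # xs)" unfolding walk_def
  proof (intro conjI allI impI)
    fix i assume i: "Suc i < length (x # y # xs)"
    show "{(x # y # xs) ! i, (x # y # xs) ! Suc i} \<in> E"
    proof (cases i)
      case 0 then show ?thesis using a by simp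
    next
      case (Suc j)
      then show ?thesis using a i unfolding walk_def by auto
    qed
  qed simp
qed

lemma walk_wk: "walk E xs = wk E xs"
proof (induction E xs rule: wk.induct)
  case (1 E) then show ?case by (simp add: walk_def)
next
  case (2 E x) then show ?case by (simp add: walk_def)
next
  case (3 E x y xs) then show ?case by (simp add: walk_Cons2)
qed

lemma wk_ne: "wk E xs \<Longrightarrow> xs \<noteq> []" by (cases xs) auto

lemma wk_mono: "wk E xs \<Longrightarrow> E \<subseteq> E' \<Longrightarrow> wk E' xs"
  by (induction E xs rule: wk.induct) auto

lemma wk_append: "wk E xs \<Longrightarrow> wk E ys \<Longrightarrow> last xs = hd ys \<Longrightarrow> wk E (xs @ tl ys)"
proof (induction E xs rule: wk.induct)
  case (2 E x) then show ?case by (cases ys) auto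
qed auto

lemma wk_append2: "wk E xs \<Longrightarrow> wk E ys \<Longrightarrow> {last xs, hd ys} \<in> E \<Longrightarrow> wk E (xs @ ys)"
proof (induction E xs rule: wk.induct)
  case (2 E x) then show ?case by (cases ys) auto
qed auto

lemma wk_rev: "wk E xs \<Longrightarrow> wk E (rev xs)"
proof (induction E xs rule: wk.induct)
  case (3 E x y xs)
  have "wk E [y, x]" using 3 by (simp add: insert_commute)
  moreover have "last (rev (y # xs)) = hd [y, x]" by simp
  ultimately have "wk E (rev (y # xs) @ tl [y, x])" using wk_append 3 by (metis wk.simps(3))
  then show ?case by simp
qed auto

lemma hd_app: "xs \<noteq> [] \<Longrightarrow> hd (xs @ ys) = hd xs" by simp
lemma last_app_tl: "xs \<noteq> [] \<Longrightarrow> ys \<noteq> [] \<Longrightarrow> last xs = hd ys \<Longrightarrow> last (xs @ tl ys) = last ys"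
  by (cases ys) auto

definition conn :: "'a set set \<Rightarrow> 'a \<Rightarrow> 'a \<Rightarrow> bool" where
  "conn E u v \<longleftrightarrow> (\<exists>xs. wk E xs \<and> hd xs = u \<and> last xs = v)"

lemma conn_refl: "conn E u u" unfolding conn_def by (intro exI[of _ "[u]"]) auto
lemma conn_edge: "{u, v} \<in> E \<Longrightarrow> conn E u v" unfolding conn_def by (intro exI[of _ "[u, v]"]) auto
lemma conn_trans: "conn E u v \<Longrightarrow> conn E v w \<Longrightarrow> conn E u w"
proof -
  assume "conn E u v" "conn E v w"
  then obtain xs ys where "wk E xs" "hd xs = u" "last xs = v" "wk E ys" "hd ys = v" "last ys = w"
    unfolding conn_def by blast
  then show ?thesis unfolding conn_def
    by (intro exI[of _ "xs @ tl ys"]) (simp add: wk_append wk_ne last_app_tl)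
qed
lemma conn_sym: "conn E u v \<Longrightarrow> conn E v u"
proof -
  assume "conn E u v"
  then obtain xs where "wk E xs" "hd xs = u" "last xs = v" unfolding conn_def by blast
  then show ?thesis unfolding conn_def
    by (intro exI[of _ "rev xs"]) (simp add: wk_rev wk_ne hd_rev last_rev)
qed
lemma conn_mono: "conn E u v \<Longrightarrow> E \<subseteq> E' \<Longrightarrow> conn E' u v"
  unfolding conn_def using wk_mono by blast

lemma wk_distinct: "wk E xs \<Longrightarrow> \<exists>ys. wk E ys \<and> distinct ys \<and> hd ys = hd xs \<and> last ys = last xs"
proof (induction E xs rule: wk.induct)
  case (2 E x) then show ?case by (intro exI[of _ "[x]"]) auto
next
  case (3 E x y xs)
  then obtain ys where ys: "wk E ys" "distinct ys" "hd ys = y" "last ys = last (y # xs)" by auto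
  show ?case
  proof (cases "x \<in> set ys")
    case True
    then obtain ys1 ys2 where sp: "ys = ys1 @ x # ys2" by (meson split_list)
    have "wk E (x # ys2)"
    proof -
      have "\<And>zs. wk E (zs @ x # ys2) \<Longrightarrow> wk E (x # ys2)"
      proof -
        fix zs show "wk E (zs @ x # ys2) \<Longrightarrow> wk E (x # ys2)"
        proof (induction zs)
          case (Cons a zs) then show ?case by (cases zs) auto
        qed simp
      qed
      then show ?thesis using ys(1) sp by blast
    qed
    moreover have "distinct (x # ys2)" using ys(2) sp by auto
    moreover have "last (x # ys2) = last (x # y # xs)" using ys(4) sp by (cases ys2) auto
    ultimately show ?thesis by (intro exI[of _ "x # ys2"]) auto
  next
    case False
    have "ys \<noteq> []" using wk_ne ys(1) by auto
    then obtain z zs where "ys = z # zs" by (cases ys) auto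
    then have "wk E (x # ys)" using ys 3 by auto
    moreover have "distinct (x # ys)" using ys False by auto
    moreover have "last (x # ys) = last (x # y # xs)" using ys \<open>ys \<noteq> []\<close> by auto
    ultimately show ?thesis by (intro exI[of _ "x # ys"]) auto
  qed
qed auto

lemma forest_no_bypass:
  assumes F: "forest V E" and e: "{a, b} \<in> E" and c: "conn (E - {{a, b}}) a b"
  shows False
proof -
  have "card {a, b} = 2" using F e unfolding forest_def graph_def by auto
  then have ab: "a \<noteq> b" by (cases "a = b") auto
  obtain xs where xs: "wk (E - {{a,b}}) xs" "hd xs = a" "last xs = b" using c unfolding conn_def by auto
  obtain ys where ys: "wk (E - {{a,b}}) ys" "distinct ys" "hd ys = a" "last ys = b"
    using wk_distinct[OF xs(1)] xs by auto
  obtain ys' where ys': "ys = a # ys'" using ys wk_ne by (cases ys) auto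
  have "ys' \<noteq> []" using ys ys' ab by auto
  then obtain c zs where czs: "ys' = c # zs" by (cases ys') auto
  show False
  proof (cases "zs = []")
    case True
    then have "c = b" using ys ys' czs by auto
    then show False using ys(1) ys' czs True by auto
  next
    case False
    have "walk E ys" unfolding walk_wk using wk_mono[OF ys(1)] by auto
    moreover have "3 \<le> length ys" using ys' czs False by (cases zs) auto
    moreover have "{last ys, hd ys} \<in> E" using ys e by (simp add: insert_commute)
    ultimately show False using F ys(2) unfolding forest_def by blast
  qed
qed


fun chl :: "('a \<Rightarrow> 'a) \<Rightarrow> nat \<Rightarrow> 'a \<Rightarrow> 'a list" where
  "chl f 0 w = [w]"
| "chl f (Suc n) w = w # chl f n (f w)"

lemma chl_hd: "hd (chl f n w) = w" by (cases n) auto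
lemma chl_ne: "chl f n w \<noteq> []" by (cases n) auto
lemma chl_last: "last (chl f n w) = (f ^^ n) w"
  by (induction n arbitrary: w) (simp_all add: funpow_swap1 chl_ne)
lemma chl_len: "length (chl f n w) = Suc n" by (induction n arbitrary: w) auto

locale FR =
  fixes V :: "'a set" and E :: "'a set set" and R :: "'a set"
  assumes forest: "forest V E" and RV: "R \<subseteq> V"
    and comp12: "\<forall>C\<in>components V E. card (C \<inter> R) = 1 \<or> card (C \<inter> R) = 2"
    and dist7: "\<forall>C\<in>double_rooted_comps V E R. \<forall>r1\<in>C \<inter> R. \<forall>r2\<in>C \<inter> R. r1 \<noteq> r2 \<longrightarrow> dist_ge E r1 r2 7"
begin

lemma finV: "finite V" using forest unfolding forest_def graph_def by auto

lemma edge: "e \<in> E \<Longrightarrow> e \<subseteq> V \<and> card e = 2" using forest unfolding forest_def graph_def by auto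

lemma edgeV: "{a, b} \<in> E \<Longrightarrow> a \<in> V \<and> b \<in> V \<and> a \<noteq> b"
proof -
  assume e: "{a, b} \<in> E"
  then have "card {a, b} = 2" "{a,b} \<subseteq> V" using edge by auto
  then show ?thesis by (cases "a = b") auto
qed

lemma finE: "finite E"
proof -
  have "E \<subseteq> Pow V" using edge by auto
  then show ?thesis using finV finite_subset by blast
qed

lemma conn_V: "conn E u v \<Longrightarrow> u \<in> V \<Longrightarrow> v \<in> V"
proof -
  assume c: "conn E u v" and u: "u \<in> V"
  then obtain xs where xs: "wk E xs" "hd xs = u" "last xs = v" unfolding conn_def by auto
  have "\<And>xs. wk E xs \<Longrightarrow> hd xs \<in> V \<Longrightarrow> last xs \<in> V"
  proof -
    fix xs :: "'a list"
    show "wk E xs \<Longrightarrow> hd xs \<in> V \<Longrightarrow> last xs \<in> V"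
    proof (induction xs)
      case (Cons a xs) then show ?case by (cases xs) (auto dest: edgeV)
    qed simp
  qed
  then show ?thesis using xs u by auto
qed

definition comp_of where "comp_of r = {u. connected V E r u}"

lemma connected_conn: "connected V E r u \<longleftrightarrow> r \<in> V \<and> conn E r u"
  unfolding connected_def conn_def walk_wk by auto

lemma comp_of_in: "r \<in> V \<Longrightarrow> comp_of r \<in> components V E"
  unfolding comp_of_def components_def by auto

lemma comp_card: "r \<in> V \<Longrightarrow> card (comp_of r \<inter> R) = 1 \<or> card (comp_of r \<inter> R) = 2"
  using comp12 comp_of_in by blast

lemma reach: "w \<in> V \<Longrightarrow> \<exists>xs. wk E xs \<and> hd xs = w \<and> last xs \<in> R"
proof -
  assume w: "w \<in> V"
  have "card (comp_of w \<inter> R) \<noteq> 0" using comp_card[OF w] by auto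
  then obtain r where "r \<in> comp_of w \<inter> R" by (metis card.empty ex_in_conv)
  then have "conn E w r" "r \<in> R" unfolding comp_of_def connected_conn by auto
  then show ?thesis unfolding conn_def by auto
qed

definition D where "D w = (LEAST n. \<exists>xs. wk E xs \<and> hd xs = w \<and> last xs \<in> R \<and> length xs = Suc n)"

lemma D_wit: "w \<in> V \<Longrightarrow> \<exists>xs. wk E xs \<and> hd xs = w \<and> last xs \<in> R \<and> length xs = Suc (D w)"
proof -
  assume w: "w \<in> V"
  obtain xs where xs: "wk E xs" "hd xs = w" "last xs \<in> R" using reach[OF w] by auto
  have "length xs = Suc (length xs - 1)" using wk_ne[OF xs(1)] by (cases xs) auto
  then have "\<exists>n. \<exists>xs. wk E xs \<and> hd xs = w \<and> last xs \<in> R \<and> length xs = Suc n" using xs by blast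
  then show ?thesis unfolding D_def by (rule LeastI_ex)
qed

lemma D_le: "wk E xs \<Longrightarrow> hd xs = w \<Longrightarrow> last xs \<in> R \<Longrightarrow> D w \<le> length xs - 1"
proof -
  assume xs: "wk E xs" "hd xs = w" "last xs \<in> R"
  have "length xs = Suc (length xs - 1)" using wk_ne[OF xs(1)] by (cases xs) auto
  then show ?thesis unfolding D_def using xs by (intro Least_le) auto
qed

lemma D0: "w \<in> V \<Longrightarrow> D w = 0 \<longleftrightarrow> w \<in> R"
proof
  assume w: "w \<in> V" and d: "D w = 0"
  obtain xs where "wk E xs" "hd xs = w" "last xs \<in> R" "length xs = Suc (D w)" using D_wit[OF w] by auto
  then show "w \<in> R" using d by (cases xs) auto
next
  assume "w \<in> R"
  then show "D w = 0" using D_le[of "[w]" w] by auto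
qed

lemma D_adj: "{a, b} \<in> E \<Longrightarrow> D a \<le> Suc (D b)"
proof -
  assume e: "{a, b} \<in> E"
  then have b: "b \<in> V" using edgeV by auto
  obtain xs where xs: "wk E xs" "hd xs = b" "last xs \<in> R" "length xs = Suc (D b)" using D_wit[OF b] by auto
  obtain ys where ys: "xs = b # ys" using xs wk_ne by (cases xs) auto
  have "wk E (a # xs)" using xs ys e by (cases ys) auto
  then have "D a \<le> length (a # xs) - 1" using D_le[of "a # xs" a] xs ys by auto
  then show ?thesis using xs by simp
qed

definition par where "par w = (SOME x. {w, x} \<in> E \<and> Suc (D x) = D w)"

lemma par_ex: "w \<in> V \<Longrightarrow> w \<notin> R \<Longrightarrow> \<exists>x. {w, x} \<in> E \<and> Suc (D x) = D w"
proof -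
  assume w: "w \<in> V" "w \<notin> R"
  obtain xs where xs: "wk E xs" "hd xs = w" "last xs \<in> R" "length xs = Suc (D w)" using D_wit[OF w(1)] by auto
  have "D w \<noteq> 0" using D0[OF w(1)] w by auto
  then have "length xs \<ge> 2" using xs by auto
  then obtain a ys where "xs = a # ys" "ys \<noteq> []" by (cases xs) fastforce+
  then obtain x rest where "xs = a # x # rest" by (cases ys) auto
  then have xr: "xs = w # x # rest" using xs by auto
  have e: "{w, x} \<in> E" using xs xr by auto
  have "wk E (x # rest)" using xs xr by auto
  then have "D x \<le> length (x # rest) - 1" using D_le[of "x # rest" x] xs xr by auto
  then have "Suc (D x) \<le> D w" using xs xr by auto
  moreover have "D w \<le> Suc (D x)" using D_adj[OF e] .
  ultimately show ?thesis using e by (intro exI[of _ x]) auto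
qed

lemma par: "w \<in> V \<Longrightarrow> w \<notin> R \<Longrightarrow> {w, par w} \<in> E \<and> Suc (D (par w)) = D w"
  unfolding par_def using par_ex by (rule someI_ex) 


lemma parV: "w \<in> V \<Longrightarrow> w \<notin> R \<Longrightarrow> par w \<in> V"
proof -
  assume "w \<in> V" "w \<notin> R"
  then have "{w, par w} \<in> E" using par by blast
  then show ?thesis using edgeV by blast
qed
lemma Dpar: "w \<in> V \<Longrightarrow> w \<notin> R \<Longrightarrow> Suc (D (par w)) = D w" using par by blast
lemma par_neq: "w \<in> V \<Longrightarrow> w \<notin> R \<Longrightarrow> par w \<noteq> w"
proof
  assume "w \<in> V" "w \<notin> R" "par w = w"
  then show False using Dpar[of w] by simp
qed

definition rt where "rt w = (par ^^ D w) w"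

lemma rt_par: "w \<in> V \<Longrightarrow> w \<notin> R \<Longrightarrow> rt (par w) = rt w"
proof -
  assume w: "w \<in> V" "w \<notin> R"
  have d: "D w = Suc (D (par w))" using Dpar[OF w] by simp
  show ?thesis unfolding rt_def d by (simp add: funpow_swap1)
qed

lemma rt_self: "w \<in> R \<Longrightarrow> rt w = w"
proof -
  assume w: "w \<in> R"
  then have "D w = 0" using D0 RV by blast
  then show ?thesis unfolding rt_def by simp
qed

definition PE where "PE = (\<lambda>u. {u, par u}) ` (V - R)"
definition Cr where "Cr = E - PE"

lemma PE_E: "PE \<subseteq> E"
proof
  fix e assume "e \<in> PE"
  then obtain u where "u \<in> V - R" "e = {u, par u}" unfolding PE_def by auto
  then show "e \<in> E" using par[of u] by simp
qed

lemma wk_Cons: "ys \<noteq> [] \<Longrightarrow> wk E' (x # ys) = ({x, hd ys} \<in> E' \<and> wk E' ys)"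
  by (cases ys) auto

lemma chain: "w \<in> V \<Longrightarrow> wk PE (chl par (D w) w) \<and> rt w \<in> R"
proof (induction "D w" arbitrary: w rule: less_induct)
  case less
  show ?case
  proof (cases "w \<in> R")
    case True
    then have "D w = 0" using D0 less.prems by auto
    then show ?thesis using True rt_self by auto
  next
    case False
    have d: "D w = Suc (D (par w))" using Dpar less.prems False by auto
    have pV: "par w \<in> V" using parV less.prems False by auto
    have IH: "wk PE (chl par (D (par w)) (par w)) \<and> rt (par w) \<in> R"
      using less.hyps[of "par w"] d pV by auto
    have "chl par (D w) w = w # chl par (D (par w)) (par w)" using d by simp
    moreover have "{w, par w} \<in> PE" unfolding PE_def using less.prems False by auto
    ultimately have "wk PE (chl par (D w) w)" using IH by (simp add: wk_Cons chl_ne chl_hd)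
    then show ?thesis using IH rt_par[of w] less.prems False by auto
  qed
qed

lemma chain_last: "last (chl par (D w) w) = rt w" unfolding rt_def by (simp add: chl_last)

lemma rtR: "w \<in> V \<Longrightarrow> rt w \<in> R" using chain by simp

lemma chain_conn: "w \<in> V \<Longrightarrow> conn PE w (rt w)"
proof -
  assume w: "w \<in> V"
  show ?thesis unfolding conn_def
    by (intro exI[of _ "chl par (D w) w"]) (simp add: chain[OF w] chain_last chl_hd)
qed

lemma K1: "{a, b} \<in> Cr \<Longrightarrow> rt a \<noteq> rt b"
proof
  assume e: "{a, b} \<in> Cr" and r: "rt a = rt b"
  have ab: "a \<in> V" "b \<in> V" using e edgeV[of a b] unfolding Cr_def by auto
  have c: "conn PE a (rt b)" using chain_conn[OF ab(1)] r by simp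
  have "conn PE a b" using conn_trans[OF c conn_sym[OF chain_conn[OF ab(2)]]] .
  moreover have "PE \<subseteq> E - {{a, b}}" using e PE_E unfolding Cr_def by blast
  ultimately have "conn (E - {{a, b}}) a b" by (rule conn_mono)
  moreover have "{a, b} \<in> E" using e unfolding Cr_def by blast
  ultimately show False using forest_no_bypass[OF forest] by blast
qed

lemma K3:
  assumes e: "{a, b} \<in> Cr" "{a', b'} \<in> Cr" and r: "rt a = rt a'" "rt b = rt b'"
  shows "{a, b} = {a', b'}"
proof (rule ccontr)
  assume ne: "{a, b} \<noteq> {a', b'}"
  have V: "a \<in> V" "b \<in> V" "a' \<in> V" "b' \<in> V" using e edgeV[of a b] edgeV[of a' b'] unfolding Cr_def by auto
  let ?E = "E - {{a, b}}"
  have sub: "PE \<subseteq> ?E" using e PE_E unfolding Cr_def by blast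
  have c1': "conn ?E a (rt a')" using conn_mono[OF chain_conn[OF V(1)] sub] r by simp
  have c1: "conn ?E a a'" using conn_trans[OF c1' conn_sym[OF conn_mono[OF chain_conn[OF V(3)] sub]]] .
  have c2': "conn ?E b (rt b')" using conn_mono[OF chain_conn[OF V(2)] sub] r by simp
  have c2: "conn ?E b b'" using conn_trans[OF c2' conn_sym[OF conn_mono[OF chain_conn[OF V(4)] sub]]] .
  have "{a', b'} \<in> ?E" using e ne unfolding Cr_def by blast
  then have c3: "conn ?E a' b'" by (rule conn_edge)
  have "conn ?E a b" using conn_trans[OF conn_trans[OF c1 c3] conn_sym[OF c2]] .
  moreover have "{a, b} \<in> E" using e unfolding Cr_def by blast
  ultimately show False using forest_no_bypass[OF forest] by blast
qed

lemma cr_conn: "{a, b} \<in> Cr \<Longrightarrow> conn E (rt a) (rt b)"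
proof -
  assume e: "{a, b} \<in> Cr"
  have V: "a \<in> V" "b \<in> V" using e edgeV[of a b] unfolding Cr_def by auto
  have x: "conn E a (rt a)" "conn E b (rt b)" using conn_mono[OF chain_conn PE_E] V by auto
  have y: "conn E a b" using e unfolding Cr_def by (intro conn_edge) auto
  show ?thesis using conn_trans[OF conn_trans[OF conn_sym[OF x(1)] y] x(2)] .
qed

lemma cr_comp:
  assumes e: "{a, b} \<in> Cr"
  shows "comp_of (rt a) \<in> double_rooted_comps V E R" "{rt a, rt b} = comp_of (rt a) \<inter> R"
proof -
  have V: "a \<in> V" "b \<in> V" using e edgeV[of a b] unfolding Cr_def by auto
  have rR: "rt a \<in> R" "rt b \<in> R" using rtR V by blast+
  have rV: "rt a \<in> V" using rR RV by blast
  have m1: "rt a \<in> comp_of (rt a)" unfolding comp_of_def connected_conn using rV by (simp add: conn_refl)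
  have m2: "rt b \<in> comp_of (rt a)" unfolding comp_of_def connected_conn using rV cr_conn[OF e] by simp
  have sub: "{rt a, rt b} \<subseteq> comp_of (rt a) \<inter> R" using m1 m2 rR by blast
  have fin: "finite (comp_of (rt a) \<inter> R)" using finV RV finite_subset by (metis finite_Int)
  have c2: "card {rt a, rt b} = 2" using K1[OF e] by simp
  then have "2 \<le> card (comp_of (rt a) \<inter> R)" using card_mono[OF fin sub] by linarith
  then have c: "card (comp_of (rt a) \<inter> R) = 2" using comp_card[OF rV] by linarith
  then show "comp_of (rt a) \<in> double_rooted_comps V E R"
    unfolding double_rooted_comps_def using comp_of_in[OF rV] by blast
  show "{rt a, rt b} = comp_of (rt a) \<inter> R" using card_seteq[OF fin sub] c c2 by linarith
qed

lemma cr_dist: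
  assumes e: "{a, b} \<in> Cr"
  shows "6 \<le> D a + D b"
proof -
  have V: "a \<in> V" "b \<in> V" using e edgeV[of a b] unfolding Cr_def by auto
  let ?xs = "rev (chl par (D a) a) @ chl par (D b) b"
  have w1: "wk E (rev (chl par (D a) a))" using chain[OF V(1)] PE_E wk_mono wk_rev by blast
  have w2: "wk E (chl par (D b) b)" using chain[OF V(2)] PE_E wk_mono by blast
  have "{last (rev (chl par (D a) a)), hd (chl par (D b) b)} \<in> E"
    using e unfolding Cr_def by (simp add: last_rev chl_hd)
  then have "wk E ?xs" using wk_append2 w1 w2 by blast
  moreover have "hd ?xs = rt a" using chain_last[of a] by (simp add: hd_rev chl_ne)
  moreover have "last ?xs = rt b" using chain_last[of b] by (simp add: chl_ne)
  ultimately have W: "walk E ?xs \<and> hd ?xs = rt a \<and> last ?xs = rt b" unfolding walk_wk by simp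
  have "rt a \<in> comp_of (rt a) \<inter> R" "rt b \<in> comp_of (rt a) \<inter> R" using cr_comp(2)[OF e] by auto
  moreover have "rt a \<noteq> rt b" using K1[OF e] .
  ultimately have "dist_ge E (rt a) (rt b) 7" using dist7 cr_comp(1)[OF e] by blast
  then have "7 \<le> length ?xs - 1" using W unfolding dist_ge_def by blast
  then show ?thesis by (simp add: chl_len)
qed

lemma cr_D3:
  assumes e: "{a, b} \<in> Cr"
  shows "3 \<le> D a" "3 \<le> D b"
proof -
  have "{a, b} \<in> E" "{b, a} \<in> E" using e unfolding Cr_def by (auto simp: insert_commute)
  then have "D a \<le> Suc (D b)" "D b \<le> Suc (D a)" using D_adj by auto
  then show "3 \<le> D a" "3 \<le> D b" using cr_dist[OF e] by auto
qed

lemma K4: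
  assumes e: "{a, b} \<in> Cr" "{a', b'} \<in> Cr" and i: "{rt a, rt b} \<inter> {rt a', rt b'} \<noteq> {}"
  shows "{a, b} = {a', b'}"
proof -
  have eq: "{rt a, rt b} = {rt a', rt b'}"
  proof -
    have A: "{rt a, rt b} = comp_of (rt a) \<inter> R" by (rule cr_comp(2)[OF e(1)])
    have B: "{rt a', rt b'} = comp_of (rt a') \<inter> R" by (rule cr_comp(2)[OF e(2)])
    have ca: "conn E (rt a) (rt b)" "conn E (rt a') (rt b')" using cr_conn e by auto
    have "a \<in> V" "a' \<in> V" using e edgeV[of a b] edgeV[of a' b'] unfolding Cr_def by auto
    then have V: "rt a \<in> V" "rt a' \<in> V" using rtR RV by auto
    obtain r where r: "r \<in> {rt a, rt b}" "r \<in> {rt a', rt b'}" using i by blast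
    have "conn E (rt a) r" using r(1) ca(1) conn_refl by auto
    moreover have "conn E r (rt a')" using r(2) conn_sym[OF ca(2)] conn_refl by auto
    ultimately have aa: "conn E (rt a) (rt a')" by (rule conn_trans)
    have "comp_of (rt a) = comp_of (rt a')"
    proof (intro set_eqI iffI)
      fix u assume "u \<in> comp_of (rt a)"
      then have "conn E (rt a) u" unfolding comp_of_def connected_conn by auto
      then have "conn E (rt a') u" by (rule conn_trans[OF conn_sym[OF aa]])
      then show "u \<in> comp_of (rt a')" unfolding comp_of_def connected_conn using V by auto
    next
      fix u assume "u \<in> comp_of (rt a')"
      then have "conn E (rt a') u" unfolding comp_of_def connected_conn by auto
      then have "conn E (rt a) u" by (rule conn_trans[OF aa])
      then show "u \<in> comp_of (rt a)" unfolding comp_of_def connected_conn using V by auto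
    qed
    then show ?thesis using A B by simp
  qed
  then consider "rt a = rt a'" "rt b = rt b'" | "rt a = rt b'" "rt b = rt a'" by (auto simp: doubleton_eq_iff)
  then show ?thesis
  proof cases
    case 1 then show ?thesis using K3 e by blast
  next
    case 2
    have "{b', a'} \<in> Cr" using e(2) by (simp add: insert_commute)
    then have "{a, b} = {b', a'}" using K3[OF e(1)] 2 by blast
    then show ?thesis by (simp add: insert_commute)
  qed
qed

definition ori where "ori e = (SOME p. e = {fst p, snd p} \<and> D (fst p) \<le> D (snd p))"

lemma ori: "e \<in> E \<Longrightarrow> e = {fst (ori e), snd (ori e)} \<and> D (fst (ori e)) \<le> D (snd (ori e))"
proof -
  assume "e \<in> E"
  then have "card e = 2" using edge by auto
  then have "\<exists>a b. e = {a, b} \<and> a \<noteq> b" by (simp add: card_2_iff)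
  then obtain a b where ab: "e = {a, b}" by blast
  have "\<exists>p. e = {fst p, snd p} \<and> D (fst p) \<le> D (snd p)"
  proof (cases "D a \<le> D b")
    case True then show ?thesis using ab by (intro exI[of _ "(a,b)"]) auto
  next
    case False
    have "e = {fst (b, a), snd (b, a)}" using ab by auto
    then show ?thesis using False by (intro exI[of _ "(b,a)"]) simp
  qed
  then show ?thesis unfolding ori_def by (rule someI_ex)
qed

definition Q where "Q = ori ` Cr"

lemma Q_e: "p \<in> Q \<Longrightarrow> \<exists>e \<in> Cr. p = ori e \<and> e = {fst p, snd p}"
proof -
  assume "p \<in> Q"
  then obtain e where e: "e \<in> Cr" "p = ori e" unfolding Q_def by blast
  then have "e \<in> E" unfolding Cr_def by blast
  then have "e = {fst (ori e), snd (ori e)}" using ori by blast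
  then show ?thesis using e by blast
qed

lemma Q_Cr: "p \<in> Q \<Longrightarrow> {fst p, snd p} \<in> Cr" using Q_e by metis

lemma Q_eq: "p \<in> Q \<Longrightarrow> p' \<in> Q \<Longrightarrow> {fst p, snd p} = {fst p', snd p'} \<Longrightarrow> p = p'"
proof -
  assume p: "p \<in> Q" "p' \<in> Q" and eq: "{fst p, snd p} = {fst p', snd p'}"
  obtain e where e: "p = ori e" "e = {fst p, snd p}" using Q_e[OF p(1)] by blast
  obtain e' where e': "p' = ori e'" "e' = {fst p', snd p'}" using Q_e[OF p(2)] by blast
  have "e = e'" using e(2) e'(2) eq by simp
  then show "p = p'" using e(1) e'(1) by simp
qed

lemma Q_rt: "p \<in> Q \<Longrightarrow> p' \<in> Q \<Longrightarrow> {rt (fst p), rt (snd p)} \<inter> {rt (fst p'), rt (snd p')} \<noteq> {} \<Longrightarrow> p = p'"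
proof -
  assume p: "p \<in> Q" "p' \<in> Q" and i: "{rt (fst p), rt (snd p)} \<inter> {rt (fst p'), rt (snd p')} \<noteq> {}"
  have "{fst p, snd p} = {fst p', snd p'}" by (rule K4[OF Q_Cr[OF p(1)] Q_Cr[OF p(2)] i])
  then show "p = p'" by (rule Q_eq[OF p])
qed


lemma deg_maxdeg: "x \<in> V \<Longrightarrow> deg E x \<le> maxdeg V E"
  unfolding maxdeg_def using finV by (intro Max_ge) auto

lemma PE_Cr: "PE \<inter> Cr = {}" unfolding Cr_def by blast

lemma Q_V: "p \<in> Q \<Longrightarrow> fst p \<in> V \<and> snd p \<in> V"
proof -
  assume "p \<in> Q"
  then have "{fst p, snd p} \<in> E" using Q_Cr unfolding Cr_def by blast
  then show ?thesis using edgeV by blast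
qed

lemma Q_D3: "p \<in> Q \<Longrightarrow> 3 \<le> D (fst p) \<and> 3 \<le> D (snd p)"
  using Q_Cr cr_D3 by blast

lemma D_notR: "w \<in> V \<Longrightarrow> D w \<noteq> 0 \<Longrightarrow> w \<notin> R" using D0[of w] by auto

lemma Qnr: "(g, v) \<in> Q \<Longrightarrow> v \<notin> R \<and> par v \<notin> R \<and> par (par v) \<notin> R \<and> g \<notin> R"
proof -
  assume p: "(g, v) \<in> Q"
  have V: "g \<in> V" "v \<in> V" using Q_V[OF p] by auto
  have d: "3 \<le> D g" "3 \<le> D v" using Q_D3[OF p] by auto
  have v: "v \<notin> R" using D_notR[OF V(2)] d by auto
  have pv: "par v \<in> V" "Suc (D (par v)) = D v" using parV[OF V(2) v] Dpar[OF V(2) v] by auto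
  have pvR: "par v \<notin> R" using D_notR[OF pv(1)] pv d by auto
  have ppv: "par (par v) \<in> V" "Suc (D (par (par v))) = D (par v)" using parV[OF pv(1) pvR] Dpar[OF pv(1) pvR] by auto
  have "par (par v) \<notin> R" using D_notR[OF ppv(1)] ppv pv d by auto
  then show ?thesis using v pvR D_notR[OF V(1)] d by auto
qed

lemma rt_def': "(par ^^ D w) w = rt w" unfolding rt_def ..

lemma Qrt1: "(g, v) \<in> Q \<Longrightarrow> (g', v') \<in> Q \<Longrightarrow> (par ^^ D g) g \<noteq> (par ^^ D v') v'"
proof
  assume p: "(g, v) \<in> Q" "(g', v') \<in> Q" and eq: "(par ^^ D g) g = (par ^^ D v') v'"
  have "rt g = rt v'" using eq by (simp add: rt_def')
  then have "(g, v) = (g', v')" using Q_rt[OF p] by auto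
  then have "rt g = rt v" using \<open>rt g = rt v'\<close> by simp
  then show False using K1 Q_Cr[OF p(1)] by auto
qed

lemma Qrt2: "(g, v) \<in> Q \<Longrightarrow> (g', v') \<in> Q \<Longrightarrow> (par ^^ D v) v = (par ^^ D v') v' \<Longrightarrow> g = g' \<and> v = v'"
proof -
  assume p: "(g, v) \<in> Q" "(g', v') \<in> Q" and eq: "(par ^^ D v) v = (par ^^ D v') v'"
  have "rt v = rt v'" using eq by (simp add: rt_def')
  then have "(g, v) = (g', v')" using Q_rt[OF p] by auto
  then show ?thesis by simp
qed

lemma Qrt3: "(g, v) \<in> Q \<Longrightarrow> (g', v') \<in> Q \<Longrightarrow> (par ^^ D g) g = (par ^^ D g') g' \<Longrightarrow> g = g' \<and> v = v'"
proof -
  assume p: "(g, v) \<in> Q" "(g', v') \<in> Q" and eq: "(par ^^ D g) g = (par ^^ D g') g'"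
  have "rt g = rt g'" using eq by (simp add: rt_def')
  then have "(g, v) = (g', v')" using Q_rt[OF p] by auto
  then show ?thesis by simp
qed

lemma ppar_neq: "w \<in> V \<Longrightarrow> w \<notin> R \<Longrightarrow> par w \<notin> R \<Longrightarrow> par (par w) \<noteq> w"
proof
  assume w: "w \<in> V" "w \<notin> R" "par w \<notin> R" and eq: "par (par w) = w"
  have "Suc (D (par w)) = D w" using Dpar[OF w(1,2)] .
  moreover have "Suc (D (par (par w))) = D (par w)" using Dpar[OF parV[OF w(1,2)] w(3)] .
  ultimately show False using eq by simp
qed

lemma degb: "x \<in> V \<Longrightarrow> card {w \<in> V - R. par w = x} + (if x \<notin> R then 1 else 0)
                 + (if x \<in> fst ` Q \<union> snd ` Q then 1 else 0) \<le> maxdeg V E"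
proof -
  assume x: "x \<in> V"
  let ?T = "{e \<in> E. x \<in> e}"
  let ?Ch = "{w \<in> V - R. par w = x}"
  have fT: "finite ?T" using finE by auto
  have T: "card ?T = card (?T \<inter> PE) + card (?T \<inter> Cr)"
  proof -
    have "?T = (?T \<inter> PE) \<union> (?T \<inter> Cr)" unfolding Cr_def by blast
    moreover have "(?T \<inter> PE) \<inter> (?T \<inter> Cr) = {}" using PE_Cr by blast
    ultimately show ?thesis using fT card_Un_disjoint
      by (metis (no_types, lifting) finite_Int)
  qed
  let ?S1 = "(\<lambda>w. {w, x}) ` ?Ch"
  let ?S2 = "if x \<notin> R then {{x, par x}} else {}"
  have injS: "inj_on (\<lambda>w. {w, x}) ?Ch"
  proof (rule inj_onI)
    fix w w' assume w: "w \<in> ?Ch" "w' \<in> ?Ch" "{w, x} = {w', x}"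
    have "w \<noteq> x" "w' \<noteq> x" using w par_neq[of w] par_neq[of w'] by auto
    then show "w = w'" using w(3) by (auto simp: doubleton_eq_iff)
  qed
  have fCh: "finite ?Ch" using finV by auto
  have c1: "card ?S1 = card ?Ch" using card_image[OF injS] .
  have S1sub: "?S1 \<subseteq> ?T \<inter> PE"
  proof
    fix e assume "e \<in> ?S1"
    then obtain w where w: "w \<in> ?Ch" "e = {w, x}" by blast
    have "{w, par w} \<in> PE" unfolding PE_def using w by auto
    then show "e \<in> ?T \<inter> PE" using w PE_E by auto
  qed
  have S2sub: "?S2 \<subseteq> ?T \<inter> PE"
  proof (cases "x \<in> R")
    case False
    have "{x, par x} \<in> PE" unfolding PE_def using x False by auto
    then show ?thesis using False PE_E by auto
  qed simp
  have disj: "?S1 \<inter> ?S2 = {}"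
  proof (cases "x \<in> R")
    case False
    { fix w assume w: "w \<in> ?Ch" "{w, x} = {x, par x}"
      have "w \<noteq> x" using w par_neq[of w] by auto
      then have "w = par x" using w(2) by (auto simp: doubleton_eq_iff)
      then have False using ppar_neq[OF x False] w by auto }
    then show ?thesis using False by auto
  qed simp
  have c2: "card (?S1 \<union> ?S2) = card ?Ch + (if x \<notin> R then 1 else 0)"
    using card_Un_disjoint[OF finite_imageI[OF fCh] _ disj] c1 by auto
  have "card (?S1 \<union> ?S2) \<le> card (?T \<inter> PE)"
    by (rule card_mono) (use fT S1sub S2sub in auto)
  moreover have "(if x \<in> fst ` Q \<union> snd ` Q then 1 else 0) \<le> card (?T \<inter> Cr)"
  proof (cases "x \<in> fst ` Q \<union> snd ` Q")
    case True
    then obtain p where p: "p \<in> Q" "x = fst p \<or> x = snd p" by blast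
    then have "{fst p, snd p} \<in> ?T \<inter> Cr" using Q_Cr[OF p(1)] unfolding Cr_def by auto
    then have "?T \<inter> Cr \<noteq> {}" by blast
    then show ?thesis using True fT by (simp add: card_gt_0_iff Suc_leI)
  qed simp
  ultimately have "card ?Ch + (if x \<notin> R then 1 else 0) + (if x \<in> fst ` Q \<union> snd ` Q then 1 else 0) \<le> card ?T"
    using T c2 by linarith
  also have "card ?T = deg E x" unfolding deg_def ..
  also have "\<dots> \<le> maxdeg V E" by (rule deg_maxdeg[OF x])
  finally show ?thesis .
qed

lemma deg2_notleaf: "e1 \<in> E \<Longrightarrow> e2 \<in> E \<Longrightarrow> e1 \<noteq> e2 \<Longrightarrow> x \<in> e1 \<Longrightarrow> x \<in> e2 \<Longrightarrow> x \<notin> leaves V E R"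
proof -
  assume e: "e1 \<in> E" "e2 \<in> E" "e1 \<noteq> e2" "x \<in> e1" "x \<in> e2"
  have "{e1, e2} \<subseteq> {e \<in> E. x \<in> e}" using e by auto
  then have "card {e1, e2} \<le> deg E x" unfolding deg_def using finE by (intro card_mono) auto
  then have "deg E x \<noteq> 1" using e(3) by auto
  then show ?thesis unfolding leaves_def by auto
qed

lemma nl1: "w \<in> V \<Longrightarrow> w \<notin> R \<Longrightarrow> par w \<notin> leaves V E R"
proof -
  assume w: "w \<in> V" "w \<notin> R"
  show ?thesis
  proof (cases "par w \<in> R")
    case True then show ?thesis unfolding leaves_def by auto
  next
    case False
    have pV: "par w \<in> V" using parV[OF w] .
    have e1: "{w, par w} \<in> E" using par[OF w] by auto
    have e2: "{par w, par (par w)} \<in> E" using par[OF pV False] by auto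
    have "par (par w) \<noteq> w" using ppar_neq[OF w False] .
    moreover have "par w \<noteq> w" using par_neq[OF w] .
    ultimately have "{w, par w} \<noteq> {par w, par (par w)}" by (auto simp: doubleton_eq_iff)
    then show ?thesis using deg2_notleaf[OF e1 e2] by auto
  qed
qed

lemma nl2: "(g, v) \<in> Q \<Longrightarrow> g \<notin> leaves V E R"
proof -
  assume p: "(g, v) \<in> Q"
  have gV: "g \<in> V" "g \<notin> R" using Q_V[OF p] Qnr[OF p] by auto
  have e1: "{g, par g} \<in> PE" unfolding PE_def using gV by auto
  have e2: "{g, v} \<in> Cr" using Q_Cr[OF p] by simp
  have "{g, par g} \<noteq> {g, v}" using e1 e2 PE_Cr by auto
  then show ?thesis using deg2_notleaf[of "{g, par g}" "{g, v}"] e1 e2 PE_E unfolding Cr_def by auto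
qed

lemma E0cov: "e \<in> E \<Longrightarrow> (\<exists>w \<in> V - R. e = {w, par w}) \<or> (\<exists>(g,v) \<in> Q. e = {g,v})"
proof -
  assume e: "e \<in> E"
  show ?thesis
  proof (cases "e \<in> PE")
    case True then show ?thesis unfolding PE_def by auto
  next
    case False
    then have c: "e \<in> Cr" using e unfolding Cr_def by blast
    then have "ori e \<in> Q" unfolding Q_def by blast
    moreover have "e = {fst (ori e), snd (ori e)}" using ori e by blast
    ultimately show ?thesis by (intro disjI2 bexI[of _ "ori e"]) (auto simp: split_beta)
  qed
qed

lemma budget: "card (V - R) + 2 * card Q \<le> card E + card (double_rooted_comps V E R)"
proof -
  have fPE: "finite PE" using finE PE_E finite_subset by auto
  have cE: "card E = card PE + card Cr"
    unfolding Cr_def using card_Diff_subset[OF fPE PE_E] card_mono[OF finE PE_E] by simp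
  have injPE: "inj_on (\<lambda>u. {u, par u}) (V - R)"
  proof (rule inj_onI)
    fix u u' assume u: "u \<in> V - R" "u' \<in> V - R" "{u, par u} = {u', par u'}"
    show "u = u'"
    proof (rule ccontr)
      assume ne: "u \<noteq> u'"
      then have "u = par u'" "u' = par u" using u(3) by (auto simp: doubleton_eq_iff)
      then show False using Dpar[of u] Dpar[of u'] u by auto
    qed
  qed
  have cPE: "card PE = card (V - R)" unfolding PE_def using card_image[OF injPE] .
  have cQ: "card Q \<le> card Cr" unfolding Q_def by (rule card_image_le) (use finE Cr_def in auto)
  define f where "f e = comp_of (rt (fst (ori e)))" for e
  have fe: "\<And>e. e \<in> Cr \<Longrightarrow> e = {fst (ori e), snd (ori e)}" using ori Cr_def by blast
  have fdr: "f ` Cr \<subseteq> double_rooted_comps V E R"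
  proof
    fix C assume "C \<in> f ` Cr"
    then obtain e where e: "e \<in> Cr" "C = f e" by blast
    have "{fst (ori e), snd (ori e)} \<in> Cr" using e fe by simp
    then show "C \<in> double_rooted_comps V E R" using cr_comp(1) e f_def by simp
  qed
  have finj: "inj_on f Cr"
  proof (rule inj_onI)
    fix e e' assume e: "e \<in> Cr" "e' \<in> Cr" "f e = f e'"
    have c1: "{fst (ori e), snd (ori e)} \<in> Cr" using e fe by simp
    have c2: "{fst (ori e'), snd (ori e')} \<in> Cr" using e fe by simp
    have "{rt (fst (ori e)), rt (snd (ori e))} = {rt (fst (ori e')), rt (snd (ori e'))}"
      using cr_comp(2)[OF c1] cr_comp(2)[OF c2] e(3) f_def by simp
    then have "{fst (ori e), snd (ori e)} = {fst (ori e'), snd (ori e')}"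
      using K4[OF c1 c2] by auto
    then show "e = e'" using fe e by metis
  qed
  have fdrc: "finite (double_rooted_comps V E R)"
    unfolding double_rooted_comps_def components_def using finV by auto
  have "card Cr \<le> card (double_rooted_comps V E R)"
    using card_inj_on_le[OF finj fdr fdrc] .
  then show ?thesis using cE cPE cQ by linarith
qed


lemma final_game:
  assumes W: "finite W" "card W \<ge> card V + maxdeg V E" "inj_on \<rho> R" "\<rho> ` R \<subseteq> W"
  shows "waiter_forces W (good_copy V E R W \<rho>) (card E + card (double_rooted_comps V E R)) {} {}"
proof -
  have QV: "Q \<subseteq> V \<times> V" using Q_V by auto
  have finQ: "finite Q" unfolding Q_def Cr_def using finE by auto
  interpret WW: WC V W E R \<rho> par D Q "maxdeg V E" "leaves V E R"
    by (unfold_locales; (fact finV W RV parV D0 Dpar QV finQ Qnr Qrt1 Qrt2 Qrt3 degb nl1 nl2 E0cov refl)?)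
  have "waiter_forces W (good_copy V E R W \<rho>) (card (V - R) + 2 * card Q) {} {}" by (rule WW.main)
  then show ?thesis using budget wf_mono by blast
qed

end

theorem lemma3p22:
  fixes V :: "'a set" and E :: "'a set set" and R :: "'a set"
    and W :: "'b set" and \<rho> :: "'a \<Rightarrow> 'b"
  assumes "forest V E"
    and "R \<subseteq> V"
    and "\<forall>C\<in>components V E. card (C \<inter> R) = 1 \<or> card (C \<inter> R) = 2"
    and "\<forall>C\<in>double_rooted_comps V E R. \<forall>r1\<in>C \<inter> R. \<forall>r2\<in>C \<inter> R.
           r1 \<noteq> r2 \<longrightarrow> dist_ge E r1 r2 7"
    and "finite W"
    and "card W \<ge> card V + maxdeg V E"
    and "inj_on \<rho> R" and "\<rho> ` R \<subseteq> W"
  shows "waiter_forces W (good_copy V E R W \<rho>)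
           (card E + card (double_rooted_comps V E R)) {} {}"
proof -
  have fr: "FR V E R" unfolding FR_def using assms(1-4) by blast
  show ?thesis using FR.final_game[OF fr assms(5-8)] .
qed

end
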